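(* Let $k$ be a field, $R=k[x_1,\dots,x_d]$, $T=k[T_1,\dots,T_n]$, $S=k[x_1,\dots,x_d,T_1,\dots,T_n]$. Let $\varphi$ be an $n\times n$ alternating matrix with linear entries in $R$, $B$ the $d\times n$ matrix with linear entries in $T$ such that $[T_1,\dots,T_n]\cdot\varphi=[x_1,\dots,x_d]\cdot B$, $\mathfrak B=\begin{bmatrix}\varphi&-B^{\mathrm t}\\ B&0\end{bmatrix}$, $F_i$ equal to $(-1)^{n+d-i}$ times the Pfaffian of $\mathfrak B$ with row and column $i$ removed, and $C(\varphi)=c_T(F_{n+d})$. Then: (a) $c_T(F_i)=T_i\cdot c_T(F_{n+j})=T_i\cdot C(\varphi)$ for every $1\le i\le n$ and $1\le j\le d$; (b) $c_T(F_{n+j})=C(\varphi)$ for every $1\le j\le d$; (c) $C(\varphi)\subset I_d(B):_T(T_1,\dots,T_n)$.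
   Context: For $F\in S=T[x_1,\dots,x_d]$, the content ideal $c_T(F)$ is the ideal of $T$ generated by the coefficients of $F$ regarded as a polynomial in $x_1,\dots,x_d$ with coefficients in $T$. $I_d(B)$ is the ideal of $T$ generated by the $d\times d$ minors of $B$. *)

theory Defs
  imports "HOL-Library.Poly_Mapping" "HOL-Combinatorics.Permutations"
begin

(* T = k[T_1..T_n]: polynomials over 'k in variables indexed by nat (T_i = variable i) *)
type_synonym 'k tpoly = "(nat \<Rightarrow>\<^sub>0 nat) \<Rightarrow>\<^sub>0 'k"
(* S = T[x_1..x_d]: polynomials in the x-variables (x_j = variable j) with coefficients in T *)
type_synonym 'k spoly = "(nat \<Rightarrow>\<^sub>0 nat) \<Rightarrow>\<^sub>0 'k tpoly"

definition constT :: "'k::comm_ring_1 \<Rightarrow> 'k tpoly" where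
  "constT c = Poly_Mapping.single 0 c"

definition Tv :: "nat \<Rightarrow> 'k::comm_ring_1 tpoly" where
  "Tv i = Poly_Mapping.single (Poly_Mapping.single i 1) 1"

definition toS :: "'k::comm_ring_1 tpoly \<Rightarrow> 'k spoly" where
  "toS t = Poly_Mapping.single 0 t"

definition Xv :: "nat \<Rightarrow> 'k::comm_ring_1 spoly" where
  "Xv j = Poly_Mapping.single (Poly_Mapping.single j 1) 1"

definition linR :: "nat \<Rightarrow> (nat \<Rightarrow> 'k::comm_ring_1) \<Rightarrow> 'k spoly" where
  "linR d c = (\<Sum>j\<in>{1..d}. toS (constT (c j)) * Xv j)"

definition linT :: "nat \<Rightarrow> (nat \<Rightarrow> 'k::comm_ring_1) \<Rightarrow> 'k tpoly" where
  "linT n b = (\<Sum>i\<in>{1..n}. constT (b i) * Tv i)"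

function pfaff :: "(nat \<Rightarrow> nat \<Rightarrow> 'a::comm_ring_1) \<Rightarrow> nat list \<Rightarrow> 'a" where
  "pfaff A [] = 1"
| "pfaff A (i # rest) =
     sum_list (map (\<lambda>k. (-1) ^ k * A i (rest ! k) * pfaff A (take k rest @ drop (Suc k) rest))
                   [0..<length rest])"
  by pat_completeness auto
termination
  by (relation "measure (\<lambda>(A, xs). length xs)") auto

definition Bfrak :: "nat \<Rightarrow> (nat \<Rightarrow> nat \<Rightarrow> 'k::comm_ring_1 spoly) \<Rightarrow> (nat \<Rightarrow> nat \<Rightarrow> 'k tpoly)
     \<Rightarrow> nat \<Rightarrow> nat \<Rightarrow> 'k spoly" where
  "Bfrak n phi B a b =
     (if a \<le> n \<and> b \<le> n then phi a b
      else if a \<le> n then - toS (B (b - n) a)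
      else if b \<le> n then toS (B (a - n) b)
      else 0)"

definition Fpf :: "nat \<Rightarrow> nat \<Rightarrow> (nat \<Rightarrow> nat \<Rightarrow> 'k::comm_ring_1 spoly) \<Rightarrow> (nat \<Rightarrow> nat \<Rightarrow> 'k tpoly)
     \<Rightarrow> nat \<Rightarrow> 'k spoly" where
  "Fpf n d phi B i = (-1) ^ (n + d - i) * pfaff (Bfrak n phi B) (removeAll i [1..<n + d + 1])"

definition ideal_gen :: "'a::comm_ring_1 set \<Rightarrow> 'a set" where
  "ideal_gen G = {\<Sum>g\<in>A. r g * g | A r. finite A \<and> A \<subseteq> G}"

definition cT :: "'k::comm_ring_1 spoly \<Rightarrow> 'k tpoly set" where
  "cT F = ideal_gen (range (Poly_Mapping.lookup F))"

definition detm :: "nat \<Rightarrow> (nat \<Rightarrow> nat \<Rightarrow> 'a::comm_ring_1) \<Rightarrow> 'a" where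
  "detm m M = (\<Sum>p | p permutes {1..m}. of_int (sign p) * (\<Prod>i\<in>{1..m}. M i (p i)))"

definition minors_ideal :: "nat \<Rightarrow> nat \<Rightarrow> (nat \<Rightarrow> nat \<Rightarrow> 'a::comm_ring_1) \<Rightarrow> 'a set" where
  "minors_ideal d n B = ideal_gen {detm d (\<lambda>i j. B i (cols j)) | cols.
       strict_mono_on {1..d} cols \<and> cols ` {1..d} \<subseteq> {1..n}}"

definition colonT :: "'k::comm_ring_1 tpoly set \<Rightarrow> nat \<Rightarrow> 'k tpoly set" where
  "colonT I n = {t. \<forall>i\<in>{1..n}. t * Tv i \<in> I}"

end

theory Submission imports Defs "Jordan_Normal_Form.Determinant" begin

definition del :: "nat \<Rightarrow> 'a list \<Rightarrow> 'a list" where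
  "del k xs = take k xs @ drop (Suc k) xs"

lemma length_del[simp]: "k < length xs \<Longrightarrow> length (del k xs) = length xs - 1"
  by (simp add: del_def)

lemma nth_del: "k < length xs \<Longrightarrow> i < length xs - 1 \<Longrightarrow>
   del k xs ! i = xs ! (if i < k then i else Suc i)"
  by (auto simp: del_def nth_append min_def)

lemma set_del_subset: "set (del k xs) \<subseteq> set xs"
  by (auto simp: del_def dest: in_set_takeD in_set_dropD)

lemma del_Cons_0[simp]: "del 0 (x # xs) = xs"
  by (simp add: del_def)

lemma del_Cons_Suc[simp]: "del (Suc k) (x # xs) = x # del k xs"
  by (simp add: del_def)

lemma del_append1: "k < length xs \<Longrightarrow> del k (xs @ zs) = del k xs @ zs"
  by (simp add: del_def)

lemma del_append2: "del (length xs + k) (xs @ zs) = xs @ del k zs"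
  by (simp add: del_def)

lemma pfaff_Cons_sum:
  "pfaff A (i # rest) = (\<Sum>k<length rest. (-1)^k * A i (rest!k) * pfaff A (del k rest))"
  by (simp add: del_def interv_sum_list_conv_sum_set_nat atLeast0LessThan)

declare pfaff.simps(2)[simp del]

lemma pfaff_cong:
  "(\<And>i j. i \<in> set l \<Longrightarrow> j \<in> set l \<Longrightarrow> A i j = A' i j) \<Longrightarrow> pfaff A l = pfaff A' l"
proof (induction A l rule: pfaff.induct)
  case (1 A) then show ?case by simp
next
  case (2 A i rest)
  have IH: "pfaff A (take k rest @ drop (Suc k) rest) = pfaff A' (take k rest @ drop (Suc k) rest)"
    if "k < length rest" for k
    apply (rule 2(1))
    using that 2(2) by (auto dest: in_set_takeD in_set_dropD)
  have E: "A i (rest!k) = A' i (rest!k)" if "k < length rest" for k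
    using that 2(2) by simp
  show ?case
    by (simp only: pfaff.simps) (auto intro!: arg_cong[where f=sum_list] map_cong simp: IH E)
qed

definition alt :: "(nat \<Rightarrow> nat \<Rightarrow> 'a::comm_ring_1) \<Rightarrow> bool" where
  "alt A \<longleftrightarrow> (\<forall>i j. A i j = - A j i) \<and> (\<forall>i. A i i = 0)"

lemma alt_skew: "alt A \<Longrightarrow> A i j = - A j i"
  unfolding alt_def by (erule conjE, erule allE, erule allE, assumption)

lemma alt_diag: "alt A \<Longrightarrow> A i i = 0"
  unfolding alt_def by (erule conjE, erule allE, erule allE, assumption)

lemma antisym_sum_zero:
  fixes h :: "'b \<Rightarrow> 'b \<Rightarrow> 'a::comm_ring_1"
  assumes "finite I" "\<And>m w. m\<in>I \<Longrightarrow> w\<in>I \<Longrightarrow> h w m = - h m w" "\<And>m. m\<in>I \<Longrightarrow> h m m = 0"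
  shows "(\<Sum>m\<in>I. \<Sum>w\<in>I. h m w) = 0"
  using assms
proof (induction I rule: finite_induct)
  case empty show ?case by simp
next
  case (insert x F)
  have IH: "(\<Sum>m\<in>F. \<Sum>w\<in>F. h m w) = 0"
    apply (rule insert.IH)
     apply (rule insert.prems(1); simp)
    apply (rule insert.prems(2); simp)
    done
  have c: "(\<Sum>m\<in>F. h m x) + (\<Sum>w\<in>F. h x w) = 0"
  proof -
    have "(\<Sum>m\<in>F. h m x) + (\<Sum>w\<in>F. h x w) = (\<Sum>w\<in>F. h w x + h x w)"
      by (simp only: sum.distrib)
    also have "\<dots> = 0"
    proof (rule sum.neutral, rule ballI)
      fix w assume "w \<in> F"
      then have "h w x = - h x w" using insert.prems(1)[of x w] by simp
      then show "h w x + h x w = 0" by simp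
    qed
    finally show ?thesis .
  qed
  have hx: "h x x = 0" using insert.prems(2)[of x] by simp
  have s1: "(\<Sum>w\<in>insert x F. h m w) = h m x + (\<Sum>w\<in>F. h m w)" for m
    by (rule sum.insert[OF insert.hyps(1,2)])
  have "(\<Sum>m\<in>insert x F. \<Sum>w\<in>insert x F. h m w)
      = (\<Sum>m\<in>insert x F. h m x + (\<Sum>w\<in>F. h m w))"
    by (simp only: s1)
  also have "\<dots> = (\<Sum>m\<in>insert x F. h m x) + (\<Sum>m\<in>insert x F. \<Sum>w\<in>F. h m w)"
    by (rule sum.distrib)
  also have "(\<Sum>m\<in>insert x F. h m x) = h x x + (\<Sum>m\<in>F. h m x)"
    by (rule sum.insert[OF insert.hyps(1,2)])
  also have "(\<Sum>m\<in>insert x F. \<Sum>w\<in>F. h m w) = (\<Sum>w\<in>F. h x w) + (\<Sum>m\<in>F. \<Sum>w\<in>F. h m w)"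
    by (rule sum.insert[OF insert.hyps(1,2)])
  finally have "(\<Sum>m\<in>insert x F. \<Sum>w\<in>insert x F. h m w)
     = h x x + ((\<Sum>m\<in>F. h m x) + (\<Sum>w\<in>F. h x w)) + (\<Sum>m\<in>F. \<Sum>w\<in>F. h m w)"
    by (simp only: add.assoc)
  then show ?case by (simp only: hx c IH add_0_left add_0_right)
qed

definition adj :: "nat \<Rightarrow> nat \<Rightarrow> nat" where
  "adj w m = (if w < m then w else w - 1)"

lemma skip_bij: "m < L \<Longrightarrow> bij_betw (\<lambda>w. adj w m) ({..<L} - {m}) {..<L - 1}"
  unfolding bij_betw_def
proof
  show "inj_on (\<lambda>w. adj w m) ({..<L} - {m})"
    by (auto simp: inj_on_def adj_def split: if_splits)
  assume "m < L"
  show "(\<lambda>w. adj w m) ` ({..<L} - {m}) = {..<L - 1}"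
  proof
    show "(\<lambda>w. adj w m) ` ({..<L} - {m}) \<subseteq> {..<L - 1}"
      using \<open>m < L\<close> by (auto simp: adj_def)
    show "{..<L - 1} \<subseteq> (\<lambda>w. adj w m) ` ({..<L} - {m})"
    proof
      fix p assume p: "p \<in> {..<L - 1}"
      show "p \<in> (\<lambda>w. adj w m) ` ({..<L} - {m})"
      proof (cases "p < m")
        case True
        then show ?thesis using p by (intro image_eqI[of _ _ p]) (auto simp: adj_def)
      next
        case False
        then show ?thesis using p by (intro image_eqI[of _ _ "Suc p"]) (auto simp: adj_def)
      qed
    qed
  qed
qed

lemma skip_sum: "m < L \<Longrightarrow> (\<Sum>p<L-1. g p) = (\<Sum>w\<in>{..<L}-{m}. g (adj w m))"
  using sum.reindex_bij_betw[OF skip_bij[of m L], of g] by simp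

lemma nth_del_adj: "m < length r \<Longrightarrow> w < length r \<Longrightarrow> w \<noteq> m \<Longrightarrow> del m r ! adj w m = r ! w"
  by (subst nth_del) (auto simp: adj_def)

lemma del_del_comm:
  assumes "k1 < k2" "k2 < length r"
  shows "del (k2 - 1) (del k1 r) = del k1 (del k2 r)"
proof (rule nth_equalityI)
  show "length (del (k2 - 1) (del k1 r)) = length (del k1 (del k2 r))" using assms by simp
  fix i assume "i < length (del (k2 - 1) (del k1 r))"
  then have i: "i < length r - 2" using assms by simp
  have "del (k2 - 1) (del k1 r) ! i = del k1 r ! (if i < k2 - 1 then i else Suc i)"
    using assms i by (intro nth_del) auto
  also have "\<dots> = r ! (if (if i < k2 - 1 then i else Suc i) < k1 then (if i < k2 - 1 then i else Suc i) else Suc (if i < k2 - 1 then i else Suc i))"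
    using assms i by (intro nth_del) auto
  also have "\<dots> = r ! (if i < k1 then i else if Suc i < k2 then Suc i else Suc (Suc i))"
    using assms by (intro arg_cong[where f="(!) r"]) auto
  finally have L: "del (k2 - 1) (del k1 r) ! i = r ! (if i < k1 then i else if Suc i < k2 then Suc i else Suc (Suc i))" .
  have "del k1 (del k2 r) ! i = del k2 r ! (if i < k1 then i else Suc i)"
    using assms i by (intro nth_del) auto
  also have "\<dots> = r ! (if (if i < k1 then i else Suc i) < k2 then (if i < k1 then i else Suc i) else Suc (if i < k1 then i else Suc i))"
    using assms i by (intro nth_del) auto
  also have "\<dots> = r ! (if i < k1 then i else if Suc i < k2 then Suc i else Suc (Suc i))"
    using assms by (intro arg_cong[where f="(!) r"]) auto
  finally show "del (k2 - 1) (del k1 r) ! i = del k1 (del k2 r) ! i" using L by simp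
qed

lemma del_del_sym: "m < length r \<Longrightarrow> w < length r \<Longrightarrow> w \<noteq> m \<Longrightarrow>
   del (adj w m) (del m r) = del (adj m w) (del w r)"
  unfolding adj_def using del_del_comm[of m w r] del_del_comm[of w m r] by (cases "m < w") auto

lemma sign_adj: "m \<noteq> w \<Longrightarrow> ((-1::'a::comm_ring_1)^m * (-1)^(adj w m)) = - ((-1)^w * (-1)^(adj m w))"
proof (cases "m < w")
  case True
  then obtain w' where "w = Suc w'" by (cases w) auto
  then show ?thesis using True by (auto simp: adj_def)
next
  case False
  assume "m \<noteq> w"
  with False obtain m' where "m = Suc m'" by (cases m) auto
  then show ?thesis using False \<open>m \<noteq> w\<close> by (auto simp: adj_def)
qed

lemma E_pairs:
  fixes A :: "nat \<Rightarrow> nat \<Rightarrow> 'a::comm_ring_1"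
  shows "(\<Sum>m<length r. \<Sum>p<length r - 1. (-1)^m * (-1)^p * a (r!m) * b (del m r ! p) * pfaff A (del p (del m r)))
   = (\<Sum>m<length r. \<Sum>w<length r. if m = w then 0 else
        (-1)^m * (-1)^(adj w m) * a (r!m) * b (r!w) * pfaff A (del (adj w m) (del m r)))"
proof (rule sum.cong[OF refl])
  fix m assume m: "m \<in> {..<length r}"
  let ?X = "\<lambda>w. (-1)^m * (-1)^(adj w m) * a (r!m) * b (r!w) * pfaff A (del (adj w m) (del m r))"
  have "(\<Sum>p<length r - 1. (-1)^m * (-1)^p * a (r!m) * b (del m r ! p) * pfaff A (del p (del m r)))
     = (\<Sum>w\<in>{..<length r}-{m}. (-1)^m * (-1)^(adj w m) * a (r!m) * b (del m r ! adj w m) * pfaff A (del (adj w m) (del m r)))"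
    using m by (intro skip_sum) auto
  also have "\<dots> = (\<Sum>w\<in>{..<length r}-{m}. ?X w)"
    using m by (intro sum.cong refl) (auto simp: nth_del_adj)
  also have "\<dots> = (\<Sum>w\<in>{..<length r}-{m}. if m = w then 0 else ?X w)"
    by (intro sum.cong refl) auto
  also have "\<dots> = (\<Sum>w<length r. if m = w then 0 else ?X w)"
    using m by (subst (2) sum.remove[of _ m]) auto
  finally show "(\<Sum>p<length r - 1. (-1)^m * (-1)^p * a (r!m) * b (del m r ! p) * pfaff A (del p (del m r)))
     = (\<Sum>w<length r. if m = w then 0 else ?X w)" .
qed

definition Esum :: "(nat \<Rightarrow> nat \<Rightarrow> 'a::comm_ring_1) \<Rightarrow> (nat \<Rightarrow> 'a) \<Rightarrow> (nat \<Rightarrow> 'a) \<Rightarrow> nat list \<Rightarrow> 'a" where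
  "Esum A a b r = (\<Sum>m<length r. \<Sum>p<length r - 1. (-1)^m * (-1)^p * a (r!m) * b (del m r ! p) * pfaff A (del p (del m r)))"

lemma Esum_antisym:
  fixes A :: "nat \<Rightarrow> nat \<Rightarrow> 'a::comm_ring_1"
  shows "Esum A a b r + Esum A b a r = 0"
proof -
  let ?P = "\<lambda>m w. pfaff A (del (adj w m) (del m r))"
  let ?s = "\<lambda>m w. (-1::'a)^m * (-1)^(adj w m)"
  let ?h = "\<lambda>m w. if m = w then 0 else ?s m w * (a (r!m) * b (r!w) + b (r!m) * a (r!w)) * ?P m w"
  have "Esum A a b r + Esum A b a r = (\<Sum>m<length r. \<Sum>w<length r. ?h m w)"
    unfolding Esum_def E_pairs sum.distrib[symmetric]
    by (intro sum.cong refl) (auto simp: algebra_simps)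
  also have "\<dots> = 0"
  proof (rule antisym_sum_zero)
    fix m w assume mw: "m \<in> {..<length r}" "w \<in> {..<length r}"
    show "?h w m = - ?h m w"
    proof (cases "m = w")
      case False
      have "?P w m = ?P m w" using mw False by (simp add: del_del_sym)
      moreover have "?s w m = - ?s m w" by (rule sign_adj) (use False in auto)
      ultimately show ?thesis using False by (simp add: algebra_simps)
    qed simp
  qed auto
  finally show ?thesis .
qed

lemma Esum_diag:
  fixes A :: "nat \<Rightarrow> nat \<Rightarrow> 'a::comm_ring_1"
  shows "Esum A a a r = 0"
proof -
  let ?P = "\<lambda>m w. pfaff A (del (adj w m) (del m r))"
  let ?s = "\<lambda>m w. (-1::'a)^m * (-1)^(adj w m)"
  let ?h = "\<lambda>m w. if m = w then 0 else ?s m w * (a (r!m) * a (r!w)) * ?P m w"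
  have "Esum A a a r = (\<Sum>m<length r. \<Sum>w<length r. ?h m w)"
    unfolding Esum_def E_pairs
    by (intro sum.cong refl) (auto simp: algebra_simps)
  also have "\<dots> = 0"
  proof (rule antisym_sum_zero)
    fix m w assume mw: "m \<in> {..<length r}" "w \<in> {..<length r}"
    show "?h w m = - ?h m w"
    proof (cases "m = w")
      case False
      have "?P w m = ?P m w" using mw False by (simp add: del_del_sym)
      moreover have "?s w m = - ?s m w" by (rule sign_adj) (use False in auto)
      ultimately show ?thesis using False by (simp add: algebra_simps)
    qed simp
  qed auto
  finally show ?thesis .
qed

lemma pfaff_two: "pfaff A (i # j # r) = A i j * pfaff A r - Esum A (A i) (A j) r"
proof -
  have s1: "pfaff A (i # j # r) = (\<Sum>k<Suc (length r). (-1)^k * A i ((j#r)!k) * pfaff A (del k (j#r)))"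
    by (simp add: pfaff_Cons_sum)
  also have "\<dots> = A i j * pfaff A r + (\<Sum>m<length r. (-1)^(Suc m) * A i (r!m) * pfaff A (j # del m r))"
    by (subst sum.lessThan_Suc_shift) simp
  finally have s1: "pfaff A (i # j # r) = A i j * pfaff A r + (\<Sum>m<length r. (-1)^(Suc m) * A i (r!m) * pfaff A (j # del m r))" .
  have s2: "(\<Sum>m<length r. (-1)^(Suc m) * A i (r!m) * pfaff A (j # del m r)) = - Esum A (A i) (A j) r"
  proof -
    have eq: "(-1)^(Suc m) * A i (r!m) * pfaff A (j # del m r) =
      - (\<Sum>p<length r - 1. (-1)^m * (-1)^p * A i (r!m) * A j (del m r ! p) * pfaff A (del p (del m r)))"
      if m: "m < length r" for m
    proof -
      have "pfaff A (j # del m r) = (\<Sum>p<length r - 1. (-1)^p * A j (del m r ! p) * pfaff A (del p (del m r)))"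
        using m by (simp add: pfaff_Cons_sum)
      then show ?thesis
        by (simp add: sum_distrib_left algebra_simps sum_negf)
    qed
    have "(\<Sum>m<length r. (-1)^(Suc m) * A i (r!m) * pfaff A (j # del m r)) =
      (\<Sum>m<length r. - (\<Sum>p<length r - 1. (-1)^m * (-1)^p * A i (r!m) * A j (del m r ! p) * pfaff A (del p (del m r))))"
      by (rule sum.cong[OF refl]) (rule eq, simp)
    also have "\<dots> = - Esum A (A i) (A j) r"
      by (simp add: Esum_def sum_negf)
    finally show ?thesis .
  qed
  show ?thesis by (simp only: s1 s2 diff_conv_add_uminus)
qed

lemma pfaff_swap_front:
  assumes "alt A"
  shows "pfaff A (j # i # r) = - pfaff A (i # j # r)"
proof -
  have e: "Esum A (A j) (A i) r = - Esum A (A i) (A j) r"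
    using minus_unique[OF Esum_antisym[of A "A i" "A j" r]] by simp
  have a: "A j i = - A i j" using assms by (rule alt_skew)
  show ?thesis unfolding pfaff_two e a by simp
qed

lemma pfaff_dup_front:
  assumes "alt A"
  shows "pfaff A (x # x # r) = 0"
proof -
  have "A x x = 0" using assms by (rule alt_diag)
  then show ?thesis unfolding pfaff_two by (simp add: Esum_diag)
qed

lemma pfaff_swap_gen:
  assumes "alt A"
  shows "pfaff A (xs @ j # i # ys) = - pfaff A (xs @ i # j # ys)"
proof (induction "length xs" arbitrary: xs ys rule: less_induct)
  case less
  show ?case
  proof (cases xs)
    case Nil
    then show ?thesis using pfaff_swap_front[OF assms, of j i ys] by simp
  next
    case (Cons h xs')
    define l where "l = xs' @ i # j # ys"
    define l' where "l' = xs' @ j # i # ys"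
    define q where "q = length xs'"
    have len: "length l' = length l" by (simp add: l_def l'_def)
    have q: "Suc q < length l" by (simp add: l_def q_def)
    define t where "t = (\<lambda>k. (-1)^k * A h (l!k) * pfaff A (del k l))"
    define t' where "t' = (\<lambda>k. (-1)^k * A h (l'!k) * pfaff A (del k l'))"
    define \<tau> where "\<tau> = Transposition.transpose q (Suc q)"
    have IH: "pfaff A (zs @ j # i # ws) = - pfaff A (zs @ i # j # ws)" if "length zs < length xs" for zs ws
      by (rule less.hyps) (rule that)
    have key: "t' k = - t (\<tau> k)" if k: "k < length l" for k
    proof -
      consider "k < q" | "k = q" | "k = Suc q" | "Suc q < k" by linarith
      then show ?thesis
      proof cases
        case 1
        have d1: "del k l' = del k xs' @ j # i # ys" unfolding l'_def using 1 q_def by (simp add: del_append1)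
        have d2: "del k l = del k xs' @ i # j # ys" unfolding l_def using 1 q_def by (simp add: del_append1)
        have lk: "length (del k xs') < length xs" using 1 Cons q_def by simp
        have n: "l'!k = l!k" using 1 q_def unfolding l_def l'_def by (simp add: nth_append)
        have tk: "\<tau> k = k" using 1 by (simp add: \<tau>_def)
        have p: "pfaff A (del k l') = - pfaff A (del k l)" unfolding d1 d2 by (rule IH[OF lk])
        show ?thesis unfolding t_def t'_def tk n p by simp
      next
        case 2
        have d1: "del k l' = xs' @ i # ys" unfolding l'_def using del_append2[of xs' 0 "j # i # ys"] 2 q_def by simp
        have d2: "del (Suc k) l = xs' @ i # ys" unfolding l_def using del_append2[of xs' 1 "i # j # ys"] 2 q_def by simp
        have n1: "l'!k = j" using 2 q_def unfolding l'_def by (simp add: nth_append)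
        have n2: "l!(Suc k) = j" using 2 q_def unfolding l_def by (simp add: nth_append)
        have tk: "\<tau> k = Suc k" using 2 by (simp add: \<tau>_def)
        show ?thesis unfolding t_def t'_def tk n1 n2 d1 d2 by simp
      next
        case 3
        have d1: "del k l' = xs' @ j # ys" unfolding l'_def using del_append2[of xs' 1 "j # i # ys"] 3 q_def by simp
        have d2: "del q l = xs' @ j # ys" unfolding l_def using del_append2[of xs' 0 "i # j # ys"] q_def by simp
        have n1: "l'!k = i" using 3 q_def unfolding l'_def by (simp add: nth_append)
        have n2: "l!q = i" using q_def unfolding l_def by (simp add: nth_append)
        have tk: "\<tau> k = q" using 3 by (simp add: \<tau>_def)
        show ?thesis unfolding t_def t'_def tk n1 n2 d1 d2 using 3 by simp
      next
        case 4
        define m where "m = k - Suc (Suc q)"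
        have m: "k = length (xs' @ [i, j]) + m" using 4 unfolding m_def q_def by simp
        have d1: "del k l' = xs' @ j # i # del m ys"
          unfolding l'_def using del_append2[of "xs' @ [j, i]" m ys] m by simp
        have d2: "del k l = xs' @ i # j # del m ys"
          unfolding l_def using del_append2[of "xs' @ [i, j]" m ys] m by simp
        have lk: "length xs' < length xs" using Cons by simp
        have p: "pfaff A (del k l') = - pfaff A (del k l)" unfolding d1 d2 by (rule IH[OF lk])
        have n: "l'!k = l!k" using m unfolding l_def l'_def by (simp add: nth_append)
        have tk: "\<tau> k = k" using 4 by (simp add: \<tau>_def)
        show ?thesis unfolding t_def t'_def tk n p by simp
      qed
    qed
    have perm: "\<tau> permutes {..<length l}" unfolding \<tau>_def using q
      by (intro permutes_swap_id) auto
    have e1: "pfaff A (xs @ j # i # ys) = pfaff A (h # l')" using Cons by (simp add: l'_def)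
    have e2: "pfaff A (h # l') = (\<Sum>k<length l'. t' k)" unfolding t'_def by (rule pfaff_Cons_sum)
    have e3: "(\<Sum>k<length l'. t' k) = (\<Sum>k<length l. - t (\<tau> k))"
    proof (rule sum.cong)
      show "{..<length l'} = {..<length l}" by (simp only: len)
    next
      fix k assume "k \<in> {..<length l}"
      then show "t' k = - t (\<tau> k)" by (intro key) simp
    qed
    have e4: "(\<Sum>k<length l. - t (\<tau> k)) = - (\<Sum>k<length l. t (\<tau> k))" by (rule sum_negf)
    have e5: "(\<Sum>k<length l. t (\<tau> k)) = (\<Sum>k<length l. t k)"
      using sum.permute[OF perm, of t] unfolding comp_def by (rule sym)
    have e6: "(\<Sum>k<length l. t k) = pfaff A (h # l)" unfolding t_def by (rule pfaff_Cons_sum[symmetric])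
    have e7: "pfaff A (h # l) = pfaff A (xs @ i # j # ys)" using Cons by (simp add: l_def)
    show ?thesis unfolding e1 e2 e3 e4 e5 e6 e7 ..
  qed
qed

lemma pfaff_to_front:
  assumes "alt A"
  shows "pfaff A (p @ xs @ y # ys) = (-1)^(length xs) * pfaff A (p @ y # xs @ ys)"
proof (induction xs arbitrary: ys rule: rev_induct)
  case Nil then show ?case by simp
next
  case (snoc h xs)
  have "pfaff A (p @ (xs @ [h]) @ y # ys) = pfaff A ((p @ xs) @ h # y # ys)" by simp
  also have "\<dots> = - pfaff A ((p @ xs) @ y # h # ys)"
    by (rule pfaff_swap_gen[OF assms])
  also have "pfaff A ((p @ xs) @ y # h # ys) = (-1)^(length xs) * pfaff A (p @ y # xs @ h # ys)"
    using snoc[of "h # ys"] by simp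
  finally show ?case by simp
qed

lemma pfaff_dup:
  assumes "alt A" "x \<in> set l"
  shows "pfaff A (x # l) = 0"
proof -
  obtain us ws where l: "l = us @ x # ws" using split_list[OF assms(2)] by blast
  have "pfaff A (x # l) = pfaff A ([x] @ us @ x # ws)" using l by simp
  also have "\<dots> = (-1)^(length us) * pfaff A ([x] @ x # us @ ws)"
    by (rule pfaff_to_front[OF assms(1)])
  also have "pfaff A ([x] @ x # us @ ws) = 0"
    using pfaff_dup_front[OF assms(1)] by simp
  finally show ?thesis by simp
qed

lemma pfaff_block:
  assumes "alt A"
  shows "pfaff A (p @ xs @ ys) = (-1)^(length xs * length ys) * pfaff A (p @ ys @ xs)"
proof (induction ys arbitrary: p)
  case Nil then show ?case by simp
next
  case (Cons y ys)
  have "pfaff A (p @ xs @ y # ys) = (-1)^(length xs) * pfaff A (p @ y # xs @ ys)"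
    by (rule pfaff_to_front[OF assms])
  also have "pfaff A (p @ y # xs @ ys) = pfaff A ((p @ [y]) @ xs @ ys)" by simp
  also have "\<dots> = (-1)^(length xs * length ys) * pfaff A ((p @ [y]) @ ys @ xs)"
    by (rule Cons)
  finally show ?case by (simp add: power_add)
qed

lemma sum_lessThan_add: "(\<Sum>k<a+b. f k) = (\<Sum>k<a. f k) + (\<Sum>k<(b::nat). f (a+k))"
  by (induction b) (simp_all add: add.assoc)

lemma pfaff_Y_front:
  assumes "\<And>y'. y' \<in> set ys \<Longrightarrow> A y y' = 0"
  shows "pfaff A ((y # ys) @ xs) = (\<Sum>k<length xs. (-1)^(length ys + k) * A y (xs!k) * pfaff A (ys @ del k xs))"
proof -
  have "pfaff A ((y # ys) @ xs) = (\<Sum>k<length ys + length xs. (-1)^k * A y ((ys@xs)!k) * pfaff A (del k (ys@xs)))"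
    by (simp add: pfaff_Cons_sum)
  also have "\<dots> = (\<Sum>k<length ys. (-1)^k * A y ((ys@xs)!k) * pfaff A (del k (ys@xs)))
     + (\<Sum>k<length xs. (-1)^(length ys + k) * A y ((ys@xs)!(length ys + k)) * pfaff A (del (length ys + k) (ys@xs)))"
    by (rule sum_lessThan_add)
  also have "(\<Sum>k<length ys. (-1)^k * A y ((ys@xs)!k) * pfaff A (del k (ys@xs))) = 0"
    using assms by (intro sum.neutral) (auto simp: nth_append)
  finally show ?thesis by (simp add: del_append2)
qed


definition pos :: "nat \<Rightarrow> nat set \<Rightarrow> nat" where
  "pos x X = card {y\<in>X. y < x}"

lemma sl_pos:
  assumes "finite X" "u < card X"
  shows "pos (sorted_list_of_set X ! u) X = u"
proof -
  let ?l = "sorted_list_of_set X"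
  have st: "sorted_wrt (<) ?l" by (rule strict_sorted_list_of_set)
  have len: "length ?l = card X" by simp
  have setl: "set ?l = X" using assms by simp
  have "{y\<in>X. y < ?l!u} = set (take u ?l)"
  proof
    show "{y\<in>X. y < ?l!u} \<subseteq> set (take u ?l)"
    proof
      fix y assume "y \<in> {y\<in>X. y < ?l!u}"
      then have y: "y \<in> set ?l" "y < ?l!u" using setl by auto
      then obtain v where v: "v < length ?l" "?l!v = y" by (auto simp: in_set_conv_nth)
      have "v < u"
      proof (rule ccontr)
        assume "\<not> v < u"
        then have "?l!u \<le> ?l!v"
          using sorted_nth_mono[OF strict_sorted_imp_sorted[OF st], of u v] v by auto
        then show False using y v by auto
      qed
      then show "y \<in> set (take u ?l)" using v assms len
        by (auto simp: in_set_conv_nth intro!: exI[of _ v])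
    qed
    show "set (take u ?l) \<subseteq> {y\<in>X. y < ?l!u}"
    proof
      fix y assume "y \<in> set (take u ?l)"
      then obtain v where v: "v < u" "?l!v = y" using assms len by (auto simp: in_set_conv_nth)
      have "?l!v < ?l!u" using sorted_wrt_nth_less[OF st, of v u] v assms len by simp
      moreover have "?l!v \<in> X" using v assms len setl nth_mem[of v ?l] by auto
      ultimately show "y \<in> {y\<in>X. y < ?l!u}" using v by simp
    qed
  qed
  then have "pos (?l!u) X = card (set (take u ?l))" by (simp add: pos_def)
  also have "\<dots> = length (take u ?l)"
    by (rule distinct_card) (simp add: distinct_take)
  also have "\<dots> = u" using assms len by simp
  finally show ?thesis .
qed

lemma sl_del:
  assumes "finite X" "u < card X"
  shows "sorted_list_of_set (X - {sorted_list_of_set X ! u}) = del u (sorted_list_of_set X)"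
proof -
  let ?l = "sorted_list_of_set X"
  have d: "distinct ?l" by simp
  have split: "take u ?l @ ?l!u # drop (Suc u) ?l = ?l"
    by (rule id_take_nth_drop[symmetric]) (simp add: assms)
  have "distinct (take u ?l @ ?l!u # drop (Suc u) ?l)" by (simp only: split d)
  then have notin: "?l!u \<notin> set (take u ?l)" by simp
  have "sorted_list_of_set (X - {?l!u}) = remove1 (?l!u) ?l"
    using assms by (simp add: sorted_list_of_set_remove)
  also have "\<dots> = remove1 (?l!u) (take u ?l @ ?l!u # drop (Suc u) ?l)" by (simp only: split)
  also have "\<dots> = take u ?l @ drop (Suc u) ?l" using notin by (simp add: remove1_append)
  finally show ?thesis by (simp add: del_def)
qed

lemma sum_sl:
  assumes "finite X"
  shows "(\<Sum>k<card X. g k (sorted_list_of_set X ! k)) = (\<Sum>x\<in>X. g (pos x X) x)"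
proof -
  let ?l = "sorted_list_of_set X"
  have b: "bij_betw ((!) ?l) {..<card X} X"
    by (rule bij_betw_nth) (simp_all add: assms)
  have "(\<Sum>x\<in>X. g (pos x X) x) = (\<Sum>k<card X. g (pos (?l!k) X) (?l!k))"
    using sum.reindex_bij_betw[OF b, of "\<lambda>x. g (pos x X) x"] by simp
  also have "\<dots> = (\<Sum>k<card X. g k (?l!k))"
    using assms by (intro sum.cong refl) (simp add: sl_pos)
  finally show ?thesis by simp
qed

definition DA :: "(nat \<Rightarrow> nat \<Rightarrow> 'a::comm_ring_1) \<Rightarrow> nat list \<Rightarrow> nat set \<Rightarrow> 'a" where
  "DA A ys Z = det (mat (length ys) (length ys) (\<lambda>(t,u). A (ys!t) (sorted_list_of_set Z ! u)))"

lemma perm_empty_set: "{p. p permutes {}} = {id}"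
  by (auto simp: permutes_empty)

lemma DA_Nil: "DA A [] Z = 1"
  by (simp add: DA_def det_def perm_empty_set)

lemma DA_Cons:
  assumes fin: "finite Z" and c: "card Z = Suc (length ys)"
  shows "DA A (y#ys) Z = (\<Sum>z\<in>Z. (-1)^(pos z Z) * A y z * DA A ys (Z - {z}))"
proof -
  let ?l = "sorted_list_of_set Z"
  let ?m = "Suc (length ys)"
  define M where "M = mat ?m ?m (\<lambda>(t,u). A ((y#ys)!t) (?l ! u))"
  have M: "M \<in> carrier_mat ?m ?m" by (simp add: M_def)
  have "DA A (y#ys) Z = det M" by (simp add: DA_def M_def)
  also have "\<dots> = (\<Sum>u<?m. M $$ (0,u) * cofactor M 0 u)"
    by (rule laplace_expansion_row[OF M]) simp
  also have "\<dots> = (\<Sum>u<card Z. (-1)^u * A y (?l!u) * DA A ys (Z - {?l!u}))"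
  proof (rule sum.cong)
    show "{..<?m} = {..<card Z}" using c by simp
  next
    fix u assume u: "u \<in> {..<card Z}"
    have sd: "sorted_list_of_set (Z - {?l!u}) = del u ?l" using fin u by (intro sl_del) auto
    have "mat_delete M 0 u = mat (length ys) (length ys) (\<lambda>(t,u'). A (ys!t) (sorted_list_of_set (Z - {?l!u}) ! u'))"
    proof (rule eq_matI)
      fix t u' assume t: "t < dim_row (mat (length ys) (length ys) (\<lambda>(t,u'). A (ys!t) (sorted_list_of_set (Z - {?l!u}) ! u')))"
        and u': "u' < dim_col (mat (length ys) (length ys) (\<lambda>(t,u'). A (ys!t) (sorted_list_of_set (Z - {?l!u}) ! u')))"
      have t': "t < length ys" and u'': "u' < length ys" using t u' by auto
      have nd: "del u ?l ! u' = ?l ! (if u' < u then u' else Suc u')"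
        using u u'' c by (intro nth_del) auto
      have ix: "(if u' < u then u' else Suc u') < ?m" using u'' u c by auto
      show "mat_delete M 0 u $$ (t, u') = mat (length ys) (length ys) (\<lambda>(t,u'). A (ys!t) (sorted_list_of_set (Z - {?l!u}) ! u')) $$ (t, u')"
        using t' u'' ix unfolding mat_delete_def M_def sd by (simp add: nd)
    qed (simp_all add: mat_delete_def M_def)
    then show "M $$ (0,u) * cofactor M 0 u = (-1)^u * A y (?l!u) * DA A ys (Z - {?l!u})"
      unfolding cofactor_def DA_def using u c by (simp add: M_def)
  qed
  also have "\<dots> = (\<Sum>z\<in>Z. (-1)^(pos z Z) * A y z * DA A ys (Z - {z}))"
    by (rule sum_sl[OF fin])
  finally show ?thesis .
qed

subsection \<open>Laplace-type expansion of the Pfaffian along rows with zero block\<close>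

definition Subs :: "nat set \<Rightarrow> nat \<Rightarrow> nat set set" where
  "Subs X p = {Z. Z \<subseteq> X \<and> card Z = p}"

lemma finite_Subs: "finite X \<Longrightarrow> finite (Subs X p)"
  unfolding Subs_def by (rule finite_subset[of _ "Pow X"]) auto

lemma pos_remove:
  assumes "finite X" "w \<noteq> z"
  shows "pos w X = pos w (X - {z}) + (if z \<in> X \<and> z < w then 1 else 0)"
proof (cases "z \<in> X \<and> z < w")
  case True
  have "{y\<in>X. y < w} = insert z {y\<in>X - {z}. y < w}" using True by auto
  moreover have "z \<notin> {y\<in>X - {z}. y < w}" by simp
  moreover have "finite {y\<in>X - {z}. y < w}" using assms by simp
  ultimately show ?thesis using True by (simp add: pos_def)
next
  case False
  have "{y\<in>X. y < w} = {y\<in>X - {z}. y < w}" using False by auto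
  then show ?thesis using False by (simp add: pos_def)
qed

lemma sign_count:
  assumes fin: "finite X" and ZX: "Z \<subseteq> X" and z: "z \<in> Z" and c: "card Z = Suc p"
  shows "p + pos z X + (\<Sum>w\<in>Z-{z}. pos w (X-{z})) = (\<Sum>w\<in>Z. pos w X) + pos z Z"
proof -
  have fZ: "finite Z" using fin ZX finite_subset by blast
  have a: "pos w X = pos w (X - {z}) + (if z < w then 1 else 0)" if "w \<in> Z - {z}" for w
    using pos_remove[OF fin, of w z] that z ZX by auto
  have "(\<Sum>w\<in>Z-{z}. pos w X) = (\<Sum>w\<in>Z-{z}. pos w (X - {z}) + (if z < w then 1 else 0))"
    using a by (intro sum.cong) auto
  also have "\<dots> = (\<Sum>w\<in>Z-{z}. pos w (X - {z})) + (\<Sum>w\<in>Z-{z}. (if z < w then 1 else 0))"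
    by (rule sum.distrib)
  also have "(\<Sum>w\<in>Z-{z}. (if z < w then 1 else 0::nat)) = card {w\<in>Z-{z}. z < w}"
    using fZ by (simp add: sum.inter_filter[symmetric])
  also have "{w\<in>Z-{z}. z < w} = {w\<in>Z. z < w}" by auto
  finally have b: "(\<Sum>w\<in>Z-{z}. pos w X) = (\<Sum>w\<in>Z-{z}. pos w (X - {z})) + card {w\<in>Z. z < w}" .
  have cc: "(\<Sum>w\<in>Z. pos w X) = pos z X + (\<Sum>w\<in>Z-{z}. pos w X)"
    using fZ z by (rule sum.remove)
  have parts: "Z = {w\<in>Z. w < z} \<union> ({z} \<union> {w\<in>Z. z < w})" using z by auto
  have "card Z = card {w\<in>Z. w < z} + card ({z} \<union> {w\<in>Z. z < w})"
    by (subst parts, rule card_Un_disjoint) (use fZ in auto)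
  also have "card ({z} \<union> {w\<in>Z. z < w}) = 1 + card {w\<in>Z. z < w}"
    by (subst card_Un_disjoint) (use fZ in auto)
  finally have d: "card Z = pos z Z + 1 + card {w\<in>Z. z < w}" by (simp add: pos_def)
  show ?thesis using b cc d c by linarith
qed

lemma pfaff_laplace:
  fixes A :: "nat \<Rightarrow> nat \<Rightarrow> 'a::comm_ring_1"
  assumes "finite X" "\<forall>y\<in>set ys. \<forall>y'\<in>set ys. A y y' = 0"
  shows "pfaff A (ys @ sorted_list_of_set X) =
    (\<Sum>Z\<in>Subs X (length ys). (-1)^(\<Sum>z\<in>Z. pos z X) * DA A ys Z * pfaff A (sorted_list_of_set (X - Z)))"
  using assms
proof (induction ys arbitrary: X)
  case Nil
  have "Subs X 0 = {{}}" using Nil.prems(1) by (auto simp: Subs_def dest: finite_subset card_0_eq)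
  then show ?case by (simp add: DA_Nil)
next
  case (Cons y ys)
  let ?p = "length ys"
  let ?sl = "sorted_list_of_set"
  have fin: "finite X" using Cons.prems by simp
  have zero: "A y y' = 0" if "y' \<in> set ys" for y' using Cons.prems that by simp
  have zs: "\<forall>y\<in>set ys. \<forall>y'\<in>set ys. A y y' = 0" using Cons.prems by simp
  have IH: "pfaff A (ys @ ?sl X') = (\<Sum>Z\<in>Subs X' ?p. (-1)^(\<Sum>z\<in>Z. pos z X') * DA A ys Z * pfaff A (?sl (X' - Z)))"
    if "finite X'" for X'
    using Cons.IH[OF that zs] .
  define G where "G = (\<lambda>x Z'. (-1)^(?p + pos x X) * A y x *
      ((-1)^(\<Sum>z\<in>Z'. pos z (X-{x})) * DA A ys Z' * pfaff A (?sl (X - {x} - Z'))))"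
  define H where "H = (\<lambda>Z z. (-1)^(\<Sum>w\<in>Z. pos w X) * ((-1)^(pos z Z) * A y z * DA A ys (Z - {z})) *
      pfaff A (?sl (X - Z)))"
  have "pfaff A ((y#ys) @ ?sl X) = (\<Sum>k<length (?sl X). (-1)^(?p + k) * A y (?sl X!k) * pfaff A (ys @ del k (?sl X)))"
    by (rule pfaff_Y_front) (rule zero)
  also have "\<dots> = (\<Sum>k<card X. (-1)^(?p+k) * A y (?sl X!k) * pfaff A (ys @ ?sl (X - {?sl X!k})))"
    using fin by (intro sum.cong) (simp_all add: sl_del)
  also have "\<dots> = (\<Sum>x\<in>X. (-1)^(?p + pos x X) * A y x * pfaff A (ys @ ?sl (X - {x})))"
    by (rule sum_sl[OF fin])
  also have "\<dots> = (\<Sum>x\<in>X. \<Sum>Z'\<in>Subs (X-{x}) ?p. G x Z')"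
    using fin by (intro sum.cong refl) (simp add: IH sum_distrib_left G_def)
  also have "\<dots> = (\<Sum>(x,Z')\<in>Sigma X (\<lambda>x. Subs (X-{x}) ?p). G x Z')"
    using fin by (intro sum.Sigma) (auto intro: finite_Subs)
  also have "\<dots> = (\<Sum>(Z,z)\<in>Sigma (Subs X (Suc ?p)) (\<lambda>Z. Z). H Z z)"
  proof (rule sum.reindex_bij_witness[where i="\<lambda>(Z,z). (z, Z - {z})" and j="\<lambda>(x,Z'). (insert x Z', x)"])
    fix a assume a: "a \<in> Sigma X (\<lambda>x. Subs (X-{x}) ?p)"
    then obtain x Z' where xz: "a = (x, Z')" "x \<in> X" "Z' \<subseteq> X - {x}" "card Z' = ?p"
      by (auto simp: Subs_def)
    have fZ': "finite Z'" using xz fin finite_subset by blast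
    have xn: "x \<notin> Z'" using xz by auto
    show "(case (case a of (x, Z') \<Rightarrow> (insert x Z', x)) of (Z, z) \<Rightarrow> (z, Z - {z})) = a"
      using xz xn by auto
    show "(case a of (x, Z') \<Rightarrow> (insert x Z', x)) \<in> Sigma (Subs X (Suc ?p)) (\<lambda>Z. Z)"
      using xz fZ' xn by (auto simp: Subs_def)
    define Z where "Z = insert x Z'"
    have ZX: "Z \<subseteq> X" and cZ: "card Z = Suc ?p" and xZ: "x \<in> Z" and ZZ': "Z - {x} = Z'"
      using xz fZ' xn by (auto simp: Z_def)
    have s: "?p + pos x X + (\<Sum>w\<in>Z-{x}. pos w (X-{x})) = (\<Sum>w\<in>Z. pos w X) + pos x Z"
      by (rule sign_count[OF fin ZX xZ cZ])
    have s2: "(-1::'a)^(?p + pos x X) * (-1)^(\<Sum>w\<in>Z'. pos w (X-{x})) = (-1)^(\<Sum>w\<in>Z. pos w X) * (-1)^(pos x Z)"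
      unfolding ZZ'[symmetric] by (simp only: power_add[symmetric] s)
    have s3: "X - {x} - Z' = X - Z" using xz by (auto simp: Z_def)
    have "G x Z' = ((-1::'a)^(?p + pos x X) * (-1)^(\<Sum>w\<in>Z'. pos w (X-{x}))) * A y x * DA A ys Z' * pfaff A (?sl (X - Z))"
      unfolding G_def s3 by (simp add: algebra_simps)
    also have "\<dots> = H Z x" unfolding s2 H_def ZZ' by (simp add: algebra_simps)
    finally show "(case (case a of (x, Z') \<Rightarrow> (insert x Z', x)) of (Z, z) \<Rightarrow> H Z z) = (case a of (x, Z') \<Rightarrow> G x Z')"
      using xz by (simp add: Z_def)
  next
    fix b assume b: "b \<in> Sigma (Subs X (Suc ?p)) (\<lambda>Z. Z)"
    then obtain Z z where zz: "b = (Z, z)" "Z \<subseteq> X" "card Z = Suc ?p" "z \<in> Z"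
      by (auto simp: Subs_def)
    have fZ: "finite Z" using zz fin finite_subset by blast
    show "(case (case b of (Z, z) \<Rightarrow> (z, Z - {z})) of (x, Z') \<Rightarrow> (insert x Z', x)) = b"
      using zz by auto
    show "(case b of (Z, z) \<Rightarrow> (z, Z - {z})) \<in> Sigma X (\<lambda>x. Subs (X-{x}) ?p)"
      using zz fZ by (auto simp: Subs_def)
  qed
  also have "\<dots> = (\<Sum>Z\<in>Subs X (Suc ?p). \<Sum>z\<in>Z. H Z z)"
    using fin by (intro sum.Sigma[symmetric]) (auto intro: finite_Subs simp: Subs_def intro: finite_subset)
  also have "\<dots> = (\<Sum>Z\<in>Subs X (length (y#ys)). (-1)^(\<Sum>z\<in>Z. pos z X) * DA A (y#ys) Z * pfaff A (?sl (X - Z)))"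
  proof (rule sum.cong)
    show "Subs X (Suc ?p) = Subs X (length (y#ys))" by simp
  next
    fix Z assume Z: "Z \<in> Subs X (length (y#ys))"
    then have fZ: "finite Z" and cZ: "card Z = Suc ?p" using fin by (auto simp: Subs_def intro: finite_subset)
    show "(\<Sum>z\<in>Z. H Z z) = (-1)^(\<Sum>z\<in>Z. pos z X) * DA A (y#ys) Z * pfaff A (?sl (X - Z))"
      unfolding DA_Cons[OF fZ cZ] H_def by (simp add: sum_distrib_left sum_distrib_right algebra_simps)
  qed
  finally show ?case .
qed


subsection \<open>Ideals generated by sets\<close>

lemma ig_base: "g \<in> G \<Longrightarrow> g \<in> ideal_gen G"
  unfolding ideal_gen_def by (auto intro!: exI[of _ "{g}"] exI[of _ "\<lambda>_. 1"])

lemma ig_zero: "0 \<in> ideal_gen G"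
  unfolding ideal_gen_def by (auto intro!: exI[of _ "{}"])

lemma ig_extend:
  fixes r :: "'a \<Rightarrow> 'a::comm_ring_1"
  assumes "finite C" "A \<subseteq> C"
  shows "(\<Sum>g\<in>A. r g * g) = (\<Sum>g\<in>C. (if g \<in> A then r g else 0) * g)"
  by (rule sum.mono_neutral_cong_left) (use assms in auto)

lemma ig_add:
  assumes "x \<in> ideal_gen G" "y \<in> ideal_gen G"
  shows "x + y \<in> ideal_gen G"
proof -
  obtain A r where A: "x = (\<Sum>g\<in>A. r g * g)" "finite A" "A \<subseteq> G" using assms(1) unfolding ideal_gen_def by blast
  obtain B s where B: "y = (\<Sum>g\<in>B. s g * g)" "finite B" "B \<subseteq> G" using assms(2) unfolding ideal_gen_def by blast
  let ?C = "A \<union> B"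
  have "x + y = (\<Sum>g\<in>?C. (if g \<in> A then r g else 0) * g) + (\<Sum>g\<in>?C. (if g \<in> B then s g else 0) * g)"
    unfolding A(1) B(1) using ig_extend[of ?C A r] ig_extend[of ?C B s] A B by simp
  also have "\<dots> = (\<Sum>g\<in>?C. ((if g \<in> A then r g else 0) + (if g \<in> B then s g else 0)) * g)"
    by (simp add: sum.distrib distrib_right)
  finally show ?thesis unfolding ideal_gen_def using A B
    by (intro CollectI exI[of _ ?C] exI[of _ "\<lambda>g. (if g \<in> A then r g else 0) + (if g \<in> B then s g else 0)"]) auto
qed

lemma ig_mult:
  assumes "x \<in> ideal_gen G"
  shows "c * x \<in> ideal_gen G"
proof -
  obtain A r where A: "x = (\<Sum>g\<in>A. r g * g)" "finite A" "A \<subseteq> G" using assms(1) unfolding ideal_gen_def by blast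
  have "c * x = (\<Sum>g\<in>A. (c * r g) * g)" unfolding A(1) by (simp add: sum_distrib_left mult.assoc)
  then show ?thesis unfolding ideal_gen_def using A
    by (intro CollectI exI[of _ A] exI[of _ "\<lambda>g. c * r g"]) auto
qed

lemma ig_uminus: "x \<in> ideal_gen G \<Longrightarrow> - x \<in> ideal_gen G"
  using ig_mult[of x G "-1"] by simp

lemma ig_sum: "finite I \<Longrightarrow> (\<And>i. i \<in> I \<Longrightarrow> f i \<in> ideal_gen G) \<Longrightarrow> sum f I \<in> ideal_gen G"
  by (induction I rule: finite_induct) (auto intro: ig_zero ig_add)

lemma ig_subset:
  assumes "G \<subseteq> ideal_gen H"
  shows "ideal_gen G \<subseteq> ideal_gen H"
proof
  fix x assume "x \<in> ideal_gen G"
  then obtain A r where A: "x = (\<Sum>g\<in>A. r g * g)" "finite A" "A \<subseteq> G" unfolding ideal_gen_def by blast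
  show "x \<in> ideal_gen H" unfolding A(1)
    using A assms by (intro ig_sum ig_mult) auto
qed

lemma ig_eqI: "G \<subseteq> ideal_gen H \<Longrightarrow> H \<subseteq> ideal_gen G \<Longrightarrow> ideal_gen G = ideal_gen H"
  using ig_subset by blast

lemma ig_image_mult:
  "ideal_gen ((\<lambda>u. t * u) ` X) = (\<lambda>u. t * u) ` ideal_gen X"
proof
  show "ideal_gen ((\<lambda>u. t * u) ` X) \<subseteq> (\<lambda>u. t * u) ` ideal_gen X"
  proof
    fix x assume "x \<in> ideal_gen ((\<lambda>u. t * u) ` X)"
    then obtain A r where A: "x = (\<Sum>g\<in>A. r g * g)" "finite A" "A \<subseteq> (\<lambda>u. t * u) ` X"
      unfolding ideal_gen_def by blast
    have "\<forall>g\<in>A. \<exists>h. h \<in> X \<and> g = t * h" using A(3) by blast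
    then obtain f where f: "\<And>g. g \<in> A \<Longrightarrow> f g \<in> X \<and> g = t * f g" by metis
    have w: "(\<Sum>g\<in>A. r g * f g) \<in> ideal_gen X"
      using A(2) f by (intro ig_sum ig_mult ig_base) auto
    have "x = t * (\<Sum>g\<in>A. r g * f g)"
      unfolding A(1) sum_distrib_left
    proof (rule sum.cong[OF refl])
      fix g assume g: "g \<in> A"
      from f[OF g] have e: "g = t * f g" by simp
      have "r g * g = r g * (t * f g)" by (rule arg_cong[where f="\<lambda>z. r g * z"], rule e)
      then show "r g * g = t * (r g * f g)" by (simp add: algebra_simps)
    qed
    then show "x \<in> (\<lambda>u. t * u) ` ideal_gen X" using w by blast
  qed
  show "(\<lambda>u. t * u) ` ideal_gen X \<subseteq> ideal_gen ((\<lambda>u. t * u) ` X)"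
  proof
    fix x assume "x \<in> (\<lambda>u. t * u) ` ideal_gen X"
    then obtain w where w: "x = t * w" "w \<in> ideal_gen X" by blast
    then obtain A r where A: "w = (\<Sum>g\<in>A. r g * g)" "finite A" "A \<subseteq> X"
      unfolding ideal_gen_def by blast
    have "x = (\<Sum>g\<in>A. r g * (t * g))" unfolding w(1) A(1) sum_distrib_left by (simp add: algebra_simps)
    also have "\<dots> \<in> ideal_gen ((\<lambda>u. t * u) ` X)"
      using A by (intro ig_sum ig_mult ig_base) auto
    finally show "x \<in> ideal_gen ((\<lambda>u. t * u) ` X)" .
  qed
qed

subsection \<open>The embedding toS and content ideals\<close>

lemma toS_add: "toS (a + b) = toS a + toS b" by (simp add: toS_def single_add)
lemma toS_mult: "toS (a * b) = toS a * toS b" by (simp add: toS_def mult_single)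
lemma toS_one: "toS 1 = 1" by (simp add: toS_def single_one)
lemma toS_zero: "toS 0 = 0" by (simp add: toS_def)
lemma toS_uminus: "toS (- a) = - toS a" by (simp add: toS_def single_uminus)

interpretation toS_hom: comm_ring_hom "toS :: 'k::comm_ring_1 tpoly \<Rightarrow> 'k spoly"
  by unfold_locales (simp_all add: toS_add toS_mult toS_one toS_zero)

lemma constT_uminus: "constT (- a) = - constT a" by (simp add: constT_def single_uminus)
lemma constT_zero: "constT 0 = 0" by (simp add: constT_def)

lemma lookup_single_mult_aux:
  fixes G :: "('a::cancel_comm_monoid_add) \<Rightarrow>\<^sub>0 ('b::comm_semiring_1)"
  shows "Poly_Mapping.lookup (Poly_Mapping.single m c * G) k = c * Sum_any (\<lambda>q. Poly_Mapping.lookup G q when k = m + q)"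
proof -
  have "Poly_Mapping.lookup (Poly_Mapping.single m c * G) k = Sum_any (\<lambda>l. Poly_Mapping.lookup (Poly_Mapping.single m c) l * Sum_any (\<lambda>q. Poly_Mapping.lookup G q when k = l + q))"
    by (rule Poly_Mapping.lookup_mult)
  also have "\<dots> = Sum_any (\<lambda>l. if l = m then c * Sum_any (\<lambda>q. Poly_Mapping.lookup G q when k = m + q) else 0)"
    by (rule Sum_any.cong) (auto simp: lookup_single when_def)
  also have "\<dots> = c * Sum_any (\<lambda>q. Poly_Mapping.lookup G q when k = m + q)"
    by (rule Sum_any.delta)
  finally show ?thesis .
qed

lemma lookup_single_mult_shiftc:
  fixes G :: "('a::cancel_comm_monoid_add) \<Rightarrow>\<^sub>0 ('b::comm_semiring_1)"
  shows "Poly_Mapping.lookup (Poly_Mapping.single m c * G) (m + q) = c * Poly_Mapping.lookup G q"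
proof -
  have "Sum_any (\<lambda>q'. Poly_Mapping.lookup G q' when m + q = m + q') = Sum_any (\<lambda>q'. if q' = q then Poly_Mapping.lookup G q else 0)"
    by (rule Sum_any.cong) (auto simp: when_def)
  then show ?thesis by (simp add: lookup_single_mult_aux)
qed

lemma lookup_single_mult_shift:
  fixes G :: "('a::cancel_comm_monoid_add) \<Rightarrow>\<^sub>0 ('b::comm_semiring_1)"
  shows "Poly_Mapping.lookup (Poly_Mapping.single m 1 * G) (m + q) = Poly_Mapping.lookup G q"
  using lookup_single_mult_shiftc[of m 1 G q] by simp

lemma lookup_toS_mult: "Poly_Mapping.lookup (toS t * G) k = t * Poly_Mapping.lookup G k"
  using lookup_single_mult_shiftc[of 0 t G k] by (simp add: toS_def)

lemma cT_toS: "cT (toS t * G) = (\<lambda>u. t * u) ` cT G"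
proof -
  have "range (Poly_Mapping.lookup (toS t * G)) = (\<lambda>u. t * u) ` range (Poly_Mapping.lookup G)"
    by (auto simp: lookup_toS_mult)
  then show ?thesis unfolding cT_def by (simp add: ig_image_mult)
qed

lemma cT_uminus: "cT (- G) = cT G"
  unfolding cT_def
proof (rule ig_eqI)
  show "range (Poly_Mapping.lookup (- G)) \<subseteq> ideal_gen (range (Poly_Mapping.lookup G))"
  proof
    fix x assume "x \<in> range (Poly_Mapping.lookup (- G))"
    then obtain k where "x = - Poly_Mapping.lookup G k" by auto
    then show "x \<in> ideal_gen (range (Poly_Mapping.lookup G))"
      by (simp only:) (rule ig_uminus, rule ig_base, simp)
  qed
  show "range (Poly_Mapping.lookup G) \<subseteq> ideal_gen (range (Poly_Mapping.lookup (- G)))"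
  proof
    fix x assume "x \<in> range (Poly_Mapping.lookup G)"
    then obtain k where "x = Poly_Mapping.lookup G k" by blast
    then have "x = - Poly_Mapping.lookup (- G) k" by simp
    then show "x \<in> ideal_gen (range (Poly_Mapping.lookup (- G)))"
      by (simp only:) (rule ig_uminus, rule ig_base, simp)
  qed
qed

lemma lookup_single_mult_zero:
  fixes G :: "('a::cancel_comm_monoid_add) \<Rightarrow>\<^sub>0 ('b::comm_semiring_1)"
  assumes "\<And>q. k \<noteq> m + q"
  shows "Poly_Mapping.lookup (Poly_Mapping.single m 1 * G) k = 0"
proof -
  have "Sum_any (\<lambda>q. Poly_Mapping.lookup G q when k = m + q) = Sum_any (\<lambda>q::'a. 0)"
    by (rule Sum_any.cong) (use assms in \<open>auto simp: when_def\<close>)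
  then show ?thesis by (simp add: lookup_single_mult_aux[of m 1])
qed

lemma cT_Xv: "cT (Xv j * G) = cT G"
  unfolding cT_def
proof (rule ig_eqI)
  let ?m = "Poly_Mapping.single j (1::nat)"
  show "range (Poly_Mapping.lookup (Xv j * G)) \<subseteq> ideal_gen (range (Poly_Mapping.lookup G))"
  proof
    fix x assume "x \<in> range (Poly_Mapping.lookup (Xv j * G))"
    then obtain k where k: "x = Poly_Mapping.lookup (Xv j * G) k" by blast
    show "x \<in> ideal_gen (range (Poly_Mapping.lookup G))"
    proof (cases "\<exists>q. k = ?m + q")
      case True
      then obtain q where q: "k = ?m + q" by blast
      have "x = Poly_Mapping.lookup G q" unfolding k q Xv_def by (rule lookup_single_mult_shift)
      then show ?thesis by (auto intro: ig_base)
    next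
      case False
      then have "x = 0" unfolding k Xv_def by (intro lookup_single_mult_zero) auto
      then show ?thesis by (simp add: ig_zero)
    qed
  qed
  show "range (Poly_Mapping.lookup G) \<subseteq> ideal_gen (range (Poly_Mapping.lookup (Xv j * G)))"
  proof
    fix x assume "x \<in> range (Poly_Mapping.lookup G)"
    then obtain q where q: "x = Poly_Mapping.lookup G q" by blast
    have "x = Poly_Mapping.lookup (Xv j * G) (?m + q)" unfolding q Xv_def by (rule lookup_single_mult_shift[symmetric])
    then show "x \<in> ideal_gen (range (Poly_Mapping.lookup (Xv j * G)))" by (auto intro: ig_base)
  qed
qed

lemma lookup_in_ig:
  assumes "F \<in> ideal_gen (toS ` M)"
  shows "Poly_Mapping.lookup F k \<in> ideal_gen M"
proof -
  obtain A r where A: "F = (\<Sum>g\<in>A. r g * g)" "finite A" "A \<subseteq> toS ` M"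
    using assms unfolding ideal_gen_def by blast
  have "Poly_Mapping.lookup F k = (\<Sum>g\<in>A. Poly_Mapping.lookup (r g * g) k)" unfolding A(1) by (rule lookup_sum)
  also have "\<dots> \<in> ideal_gen M"
  proof (rule ig_sum[OF A(2)])
    fix g assume "g \<in> A"
    then obtain m where m: "m \<in> M" "g = toS m" using A(3) by blast
    have e: "r g * g = toS m * r g" unfolding m(2) by (rule mult.commute)
    have "Poly_Mapping.lookup (r g * g) k = m * Poly_Mapping.lookup (r g) k" unfolding e by (rule lookup_toS_mult)
    moreover have "Poly_Mapping.lookup (r g) k * m \<in> ideal_gen M" by (rule ig_mult, rule ig_base, rule m(1))
    ultimately show "Poly_Mapping.lookup (r g * g) k \<in> ideal_gen M" by (simp add: mult.commute)
  qed
  finally show ?thesis .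
qed

lemma cT_sub:
  assumes "F \<in> ideal_gen (toS ` M)"
  shows "cT F \<subseteq> ideal_gen M"
  unfolding cT_def by (rule ig_subset) (use lookup_in_ig[OF assms] in auto)

subsection \<open>Leibniz determinant vs. JNF determinant\<close>

lemma conj_perm:
  assumes "p permutes A" "bij_betw f A B" "\<And>x. x \<in> A \<Longrightarrow> f' (f x) = x" "finite A"
  shows "(\<lambda>x. if x \<in> B then f (p (f' x)) else x) permutes B \<and>
         sign (\<lambda>x. if x \<in> B then f (p (f' x)) else x) = sign p"
proof -
  interpret permutes_bij_finite p A B f f' "\<lambda>x. if x \<in> B then f (p (f' x)) else x"
    by unfold_locales (use assms in auto)
  show ?thesis using permutes_p' sign_p' by simp
qed

lemma detm_det: "detm m M = det (mat m m (\<lambda>(i,j). M (Suc i) (Suc j)))"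
proof -
  let ?S = "{p. p permutes {1..m}}" and ?T = "{q. q permutes {0..<m}}"
  define J where "J = (\<lambda>p::nat\<Rightarrow>nat. (\<lambda>x. if x \<in> {0..<m} then p (Suc x) - 1 else x))"
  define I where "I = (\<lambda>q::nat\<Rightarrow>nat. (\<lambda>x. if x \<in> {1..m} then Suc (q (x - 1)) else x))"
  have bij1: "bij_betw (\<lambda>x. x - 1) {1..m} {0..<m}"
    by (rule bij_betw_byWitness[where f'=Suc]) auto
  have bij2: "bij_betw Suc {0..<m} {1..m}"
    by (rule bij_betw_byWitness[where f'="\<lambda>x. x - 1"]) auto
  have JS: "J p permutes {0..<m} \<and> sign (J p) = sign p" if "p permutes {1..m}" for p
    using conj_perm[OF that bij1, of Suc] unfolding J_def by simp
  have IT: "I q permutes {1..m} \<and> sign (I q) = sign q" if "q permutes {0..<m}" for q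
    using conj_perm[OF that bij2, of "\<lambda>x. x - 1"] unfolding I_def by simp
  have "detm m M = (\<Sum>p\<in>?S. of_int (sign p) * (\<Prod>i\<in>{1..m}. M i (p i)))" by (simp add: detm_def)
  also have "\<dots> = (\<Sum>q\<in>?T. of_int (sign q) * (\<Prod>i\<in>{0..<m}. M (Suc i) (Suc (q i))))"
  proof (rule sum.reindex_bij_witness[where i=I and j=J])
    fix p assume p: "p \<in> ?S"
    then have pp: "p permutes {1..m}" by simp
    show "I (J p) = p"
    proof
      fix x show "I (J p) x = p x"
      proof (cases "x \<in> {1..m}")
        case True
        then have "p x \<in> {1..m}" using permutes_in_image[OF pp] by simp
        then show ?thesis using True by (auto simp: I_def J_def)
      next
        case False
        then show ?thesis using permutes_not_in[OF pp False] by (auto simp: I_def)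
      qed
    qed
    show "J p \<in> ?T" using JS[OF pp] by simp
    have pr: "(\<Prod>i\<in>{1..m}. M i (p i)) = (\<Prod>i\<in>{0..<m}. M (Suc i) (p (Suc i)))"
    proof -
      have "(\<Prod>i\<in>{0..<m}. M (Suc i) (p (Suc i))) = (\<Prod>i\<in>Suc ` {0..<m}. M i (p i))"
        by (subst prod.reindex) auto
      also have "Suc ` {0..<m} = {1..m}" by (auto simp: image_iff)
      finally show ?thesis by simp
    qed
    have pr2: "(\<Prod>i\<in>{0..<m}. M (Suc i) (Suc (J p i))) = (\<Prod>i\<in>{0..<m}. M (Suc i) (p (Suc i)))"
    proof (rule prod.cong[OF refl])
      fix i assume i: "i \<in> {0..<m}"
      then have "p (Suc i) \<in> {1..m}" using permutes_in_image[OF pp] by simp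
      then show "M (Suc i) (Suc (J p i)) = M (Suc i) (p (Suc i))" using i by (simp add: J_def)
    qed
    show "of_int (sign (J p)) * (\<Prod>i\<in>{0..<m}. M (Suc i) (Suc (J p i))) = of_int (sign p) * (\<Prod>i\<in>{1..m}. M i (p i))"
      unfolding pr pr2 using JS[OF pp] by simp
  next
    fix q assume q: "q \<in> ?T"
    then have qq: "q permutes {0..<m}" by simp
    show "J (I q) = q"
    proof
      fix x show "J (I q) x = q x"
      proof (cases "x \<in> {0..<m}")
        case True
        then have "q x \<in> {0..<m}" using permutes_in_image[OF qq] by simp
        then show ?thesis using True by (auto simp: I_def J_def)
      next
        case False
        then show ?thesis using permutes_not_in[OF qq False] by (auto simp: J_def)
      qed
    qed
    show "I q \<in> ?S" using IT[OF qq] by simp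
  qed
  also have "\<dots> = det (mat m m (\<lambda>(i,j). M (Suc i) (Suc j)))"
  proof -
    let ?F = "\<lambda>(i,j). M (Suc i) (Suc j)"
    have "det (mat m m ?F) = (\<Sum>q\<in>?T. of_int (sign q) * (\<Prod>i = 0..<m. mat m m ?F $$ (i, q i)))"
      unfolding det_def by simp
    also have "\<dots> = (\<Sum>q\<in>?T. of_int (sign q) * (\<Prod>i\<in>{0..<m}. M (Suc i) (Suc (q i))))"
    proof (rule sum.cong[OF refl])
      fix q assume "q \<in> ?T"
      then have qq: "q permutes {0..<m}" by simp
      have "(\<Prod>i = 0..<m. mat m m ?F $$ (i, q i)) = (\<Prod>i\<in>{0..<m}. M (Suc i) (Suc (q i)))"
      proof (rule prod.cong[OF refl])
        fix i assume i: "i \<in> {0..<m}"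
        then have "q i \<in> {0..<m}" using permutes_in_image[OF qq] by simp
        then show "mat m m ?F $$ (i, q i) = M (Suc i) (Suc (q i))" using i by simp
      qed
      then show "of_int (sign q) * (\<Prod>i = 0..<m. mat m m ?F $$ (i, q i)) = of_int (sign q) * (\<Prod>i\<in>{0..<m}. M (Suc i) (Suc (q i)))"
        by simp
    qed
    finally show ?thesis by (rule sym)
  qed
  finally show ?thesis .
qed


subsection \<open>Proportionality of the Pfaffian vector to a kernel vector\<close>

lemma prop_gen:
  fixes A :: "nat \<Rightarrow> nat \<Rightarrow> 'a::comm_ring_1"
  assumes alt: "alt A" and fin: "finite U" and ker: "\<And>b. b \<in> U \<Longrightarrow> (\<Sum>u\<in>U. v u * A u b) = 0"
    and a: "a \<in> U" and c: "c \<in> U" and ac: "a \<noteq> c" and R: "set R = U - {a, c}"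
  shows "v a * pfaff A (a # R) + v c * pfaff A (c # R) = 0"
proof -
  define E where "E u = pfaff A (u # R)" for u
  have E: "E u = (\<Sum>k<length R. (-1)^k * A u (R!k) * pfaff A (del k R))" for u
    by (simp add: E_def pfaff_Cons_sum)
  have E0: "E u = 0" if "u \<in> U - {a,c}" for u
    unfolding E_def by (rule pfaff_dup[OF alt]) (use that R in simp)
  have "(\<Sum>u\<in>U. v u * E u) = (\<Sum>u\<in>U. \<Sum>k<length R. v u * ((-1)^k * A u (R!k) * pfaff A (del k R)))"
    by (simp add: E sum_distrib_left)
  also have "\<dots> = (\<Sum>k<length R. \<Sum>u\<in>U. v u * ((-1)^k * A u (R!k) * pfaff A (del k R)))"
    by (rule sum.swap)
  also have "\<dots> = (\<Sum>k<length R. ((-1)^k * pfaff A (del k R)) * (\<Sum>u\<in>U. v u * A u (R!k)))"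
    by (intro sum.cong refl) (simp add: sum_distrib_left mult_ac)
  also have "\<dots> = 0"
  proof (rule sum.neutral, rule ballI)
    fix k assume "k \<in> {..<length R}"
    then have "R!k \<in> U" using R nth_mem[of k R] by auto
    then show "((-1)^k * pfaff A (del k R)) * (\<Sum>u\<in>U. v u * A u (R!k)) = 0" by (simp add: ker)
  qed
  finally have S0: "(\<Sum>u\<in>U. v u * E u) = 0" .
  have sub: "{a, c} \<subseteq> U" using a c by simp
  have "(\<Sum>u\<in>U. v u * E u) = (\<Sum>u\<in>U - {a,c}. v u * E u) + (\<Sum>u\<in>{a,c}. v u * E u)"
    by (rule sum.subset_diff[OF sub fin])
  also have "(\<Sum>u\<in>U - {a,c}. v u * E u) = 0" by (rule sum.neutral) (simp add: E0)
  also have "(\<Sum>u\<in>{a,c}. v u * E u) = v a * E a + v c * E c" using ac by simp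
  finally show ?thesis using S0 by (simp add: E_def)
qed

lemma neg1_odd:
  assumes "odd (e1 + e2)"
  shows "(-1::'a::comm_ring_1) ^ e1 = - ((-1) ^ e2)"
proof (cases "even e1")
  case True
  then have "odd e2" using assms by simp
  then show ?thesis using True by simp
next
  case False
  then have "even e2" using assms by simp
  then show ?thesis using False by simp
qed

lemma upt_split3: "i \<le> j \<Longrightarrow> j \<le> k \<Longrightarrow> [i..<k] = [i..<j] @ [j..<k]"
  by (metis le_add_diff_inverse upt_add_eq_append)

lemma prop_upt:
  fixes A :: "nat \<Rightarrow> nat \<Rightarrow> 'a::comm_ring_1"
  assumes alt: "alt A" and ker: "\<And>b. b \<in> {1..N} \<Longrightarrow> (\<Sum>u\<in>{1..N}. v u * A u b) = 0"
    and ac: "1 \<le> a" "a < c" "c \<le> N"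
  shows "v a * ((-1)^(N - c) * pfaff A (removeAll c [1..<N+1])) = v c * ((-1)^(N - a) * pfaff A (removeAll a [1..<N+1]))"
proof -
  define R where "R = [1..<a] @ [Suc a..<c] @ [Suc c..<N+1]"
  have L: "[1..<N+1] = [1..<a] @ a # [Suc a..<c] @ c # [Suc c..<N+1]"
  proof -
    have "[1..<N+1] = [1..<a] @ [a..<N+1]" using ac by (intro upt_split3) auto
    also have "[a..<N+1] = [a..<c] @ [c..<N+1]" using ac by (intro upt_split3) auto
    also have "[a..<c] = a # [Suc a..<c]" using ac by (simp add: upt_conv_Cons)
    also have "[c..<N+1] = c # [Suc c..<N+1]" using ac by (simp add: upt_conv_Cons)
    finally show ?thesis by simp
  qed
  have q1: "removeAll c [1..<a] = [1..<a]" "removeAll c [Suc a..<c] = [Suc a..<c]"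
    "removeAll c [Suc c..<N+1] = [Suc c..<N+1]"
    "removeAll a [1..<a] = [1..<a]" "removeAll a [Suc a..<c] = [Suc a..<c]"
    "removeAll a [Suc c..<N+1] = [Suc c..<N+1]"
    using ac by (auto intro!: removeAll_id)
  have ne: "a \<noteq> c" "c \<noteq> a" using ac by auto
  have r1: "removeAll c [1..<N+1] = [] @ [1..<a] @ a # ([Suc a..<c] @ [Suc c..<N+1])"
    unfolding L by (simp only: removeAll_append removeAll.simps q1 ne if_False if_True append_Nil simp_thms(6))
  have r2: "removeAll a [1..<N+1] = [] @ ([1..<a] @ [Suc a..<c]) @ c # [Suc c..<N+1]"
    unfolding L by (simp only: removeAll_append removeAll.simps q1 ne if_False if_True append_Nil append_assoc simp_thms(6))
  have p1: "pfaff A (removeAll c [1..<N+1]) = (-1)^(a - 1) * pfaff A (a # R)"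
    unfolding r1 by (subst pfaff_to_front[OF alt]) (simp add: R_def)
  have p2: "pfaff A (removeAll a [1..<N+1]) = (-1)^(c - 2) * pfaff A (c # R)"
  proof -
    have "pfaff A (removeAll a [1..<N+1]) = (-1)^(length ([1..<a] @ [Suc a..<c])) * pfaff A ([] @ c # ([1..<a] @ [Suc a..<c]) @ [Suc c..<N+1])"
      unfolding r2 by (rule pfaff_to_front[OF alt])
    also have "length ([1..<a] @ [Suc a..<c]) = c - 2" using ac by simp
    finally show ?thesis by (simp add: R_def)
  qed
  have setR: "set R = {1..N} - {a, c}" unfolding R_def using ac by auto
  have key: "v a * pfaff A (a # R) + v c * pfaff A (c # R) = 0"
    by (rule prop_gen[OF alt _ ker _ _ _ setR]) (use ac in auto)
  define e1 where "e1 = N - c + (a - 1)"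
  define e2 where "e2 = N - a + (c - 2)"
  have odd: "odd (e1 + e2)"
  proof -
    have "e1 + e2 = 2 * (N - 2) + 1" using ac unfolding e1_def e2_def by simp
    then show ?thesis by simp
  qed
  have s: "(-1::'a) ^ e1 = - ((-1) ^ e2)" by (rule neg1_odd[OF odd])
  have "v a * ((-1)^(N - c) * pfaff A (removeAll c [1..<N+1])) = (-1)^e1 * (v a * pfaff A (a # R))"
    unfolding p1 e1_def by (simp add: power_add mult_ac)
  also have "\<dots> = (-1)^e1 * (- (v c * pfaff A (c # R)))"
  proof -
    have "v a * pfaff A (a # R) = (v a * pfaff A (a # R) + v c * pfaff A (c # R)) - v c * pfaff A (c # R)" by simp
    also have "\<dots> = - (v c * pfaff A (c # R))" unfolding key by simp
    finally show ?thesis by simp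
  qed
  also have "\<dots> = (-1)^e2 * (v c * pfaff A (c # R))" unfolding s by simp
  also have "\<dots> = v c * ((-1)^(N - a) * pfaff A (removeAll a [1..<N+1]))"
    unfolding p2 e2_def by (simp add: power_add mult_ac)
  finally show ?thesis .
qed


definition AA :: "nat \<Rightarrow> nat \<Rightarrow> (nat \<Rightarrow> nat \<Rightarrow> 'k::comm_ring_1 spoly) \<Rightarrow> (nat \<Rightarrow> nat \<Rightarrow> 'k tpoly) \<Rightarrow> nat \<Rightarrow> nat \<Rightarrow> 'k spoly" where
  "AA n d phi B a b = (if a \<in> {1..n+d} \<and> b \<in> {1..n+d} then Bfrak n phi B a b else 0)"

definition vv :: "nat \<Rightarrow> nat \<Rightarrow> 'k::comm_ring_1 spoly" where
  "vv n u = (if u \<le> n then toS (Tv u) else - Xv (u - n))"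

lemma AA_alt:
  fixes phi :: "nat \<Rightarrow> nat \<Rightarrow> 'k::comm_ring_1 spoly"
  assumes pskew: "\<And>a b. a \<in> {1..n} \<Longrightarrow> b \<in> {1..n} \<Longrightarrow> phi a b = - phi b a"
    and pdiag: "\<And>a. a \<in> {1..n} \<Longrightarrow> phi a a = 0"
  shows "alt (AA n d phi B)"
  unfolding alt_def
proof (intro conjI allI)
  fix i
  show "AA n d phi B i i = 0" using pdiag[of i] by (auto simp: AA_def Bfrak_def)
next
  fix i j
  show "AA n d phi B i j = - AA n d phi B j i"
  proof (cases "i = j")
    case True
    then show ?thesis using pdiag[of i] by (auto simp: AA_def Bfrak_def)
  next
    case False
    show ?thesis
    proof (cases "i \<in> {1..n+d} \<and> j \<in> {1..n+d}")
      case rng: True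
      show ?thesis
      proof (cases "i \<le> n \<and> j \<le> n")
        case True
        then have "phi i j = - phi j i" using rng by (intro pskew) auto
        then show ?thesis using True rng by (simp add: AA_def Bfrak_def)
      next
        case False
        then show ?thesis using rng by (auto simp: AA_def Bfrak_def)
      qed
    next
      case False
      then show ?thesis by (auto simp: AA_def)
    qed
  qed
qed

lemma Fpf_AA:
  "b \<in> {1..n+d} \<Longrightarrow> Fpf n d phi B b = (-1)^(n+d-b) * pfaff (AA n d phi B) (removeAll b [1..<n+d+1])"
proof -
  have "pfaff (Bfrak n phi B) (removeAll b [1..<n+d+1]) = pfaff (AA n d phi B) (removeAll b [1..<n+d+1])"
    by (rule pfaff_cong) (auto simp: AA_def simp del: upt_Suc)
  then show ?thesis by (simp add: Fpf_def)
qed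

lemma split_sum: "(\<Sum>u\<in>{1..n+d}. f u) = (\<Sum>u\<in>{1..n}. f u) + (\<Sum>j\<in>{1..(d::nat)}. f (n+j))"
  by (induction d) (simp_all add: sum.cl_ivl_Suc add_ac)

lemma single_one_inj: "Poly_Mapping.single j (1::nat) = Poly_Mapping.single j0 1 \<longleftrightarrow> j = j0"
proof
  assume h: "Poly_Mapping.single j (1::nat) = Poly_Mapping.single j0 1"
  have "Poly_Mapping.lookup (Poly_Mapping.single j0 (1::nat)) j = 1" unfolding h[symmetric] by simp
  then show "j = j0" by (auto simp: lookup_single when_def split: if_splits)
qed simp

lemma single_Suc0_inj: "Poly_Mapping.single j (Suc 0) = Poly_Mapping.single j0 (Suc 0) \<longleftrightarrow> j = j0"
  using single_one_inj[of j j0] by simp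

lemma g_zero:
  fixes phi :: "nat \<Rightarrow> nat \<Rightarrow> 'k::comm_ring_1 spoly"
  assumes pskew: "\<And>a b. a \<in> {1..n} \<Longrightarrow> b \<in> {1..n} \<Longrightarrow> phi a b = - phi b a"
    and pdiag: "\<And>a. a \<in> {1..n} \<Longrightarrow> phi a a = 0"
    and rel: "\<And>a. a \<in> {1..n} \<Longrightarrow> (\<Sum>i\<in>{1..n}. toS (Tv i) * phi i a) = (\<Sum>j\<in>{1..d}. Xv j * toS (B j a))"
    and j0: "j0 \<in> {1..d}"
  shows "(\<Sum>u\<in>{1..n}. Tv u * B j0 u) = 0"
proof -
  define g where "g j = (\<Sum>u\<in>{1..n}. Tv u * B j u)" for j
  have "(\<Sum>j\<in>{1..d}. Xv j * toS (g j)) = (\<Sum>j\<in>{1..d}. \<Sum>u\<in>{1..n}. toS (Tv u) * (Xv j * toS (B j u)))"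
    by (simp add: g_def toS_hom.hom_sum toS_mult sum_distrib_left mult_ac)
  also have "\<dots> = (\<Sum>u\<in>{1..n}. \<Sum>j\<in>{1..d}. toS (Tv u) * (Xv j * toS (B j u)))"
    by (rule sum.swap)
  also have "\<dots> = (\<Sum>u\<in>{1..n}. toS (Tv u) * (\<Sum>i\<in>{1..n}. toS (Tv i) * phi i u))"
  proof (rule sum.cong[OF refl])
    fix u assume u: "u \<in> {1..n}"
    have "(\<Sum>j\<in>{1..d}. toS (Tv u) * (Xv j * toS (B j u))) = toS (Tv u) * (\<Sum>j\<in>{1..d}. Xv j * toS (B j u))"
      by (simp add: sum_distrib_left)
    also have "\<dots> = toS (Tv u) * (\<Sum>i\<in>{1..n}. toS (Tv i) * phi i u)" using rel[OF u] by simp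
    finally show "(\<Sum>j\<in>{1..d}. toS (Tv u) * (Xv j * toS (B j u))) = toS (Tv u) * (\<Sum>i\<in>{1..n}. toS (Tv i) * phi i u)" .
  qed
  also have "\<dots> = (\<Sum>u\<in>{1..n}. \<Sum>i\<in>{1..n}. toS (Tv u) * toS (Tv i) * phi i u)"
    by (simp add: sum_distrib_left mult_ac)
  also have "\<dots> = 0"
  proof (rule antisym_sum_zero)
    fix m w assume mw: "m \<in> {1..n}" "w \<in> {1..n}"
    show "toS (Tv w) * toS (Tv m) * phi m w = - (toS (Tv m) * toS (Tv w) * phi w m)"
    proof (cases "m = w")
      case True
      then show ?thesis using pdiag[OF mw(1)] by simp
    next
      case False
      have "phi m w = - phi w m" using mw by (rule pskew)
      then show ?thesis by (simp add: mult_ac)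
    qed
  next
    fix m assume "m \<in> {1..n}"
    then show "toS (Tv m) * toS (Tv m) * phi m m = 0" using pdiag by simp
  qed simp
  finally have S: "(\<Sum>j\<in>{1..d}. Xv j * toS (g j)) = 0" .
  have xs: "Xv j * toS (g j) = Poly_Mapping.single (Poly_Mapping.single j 1) (g j)" for j
    by (simp add: Xv_def toS_def mult_single)
  have "Poly_Mapping.lookup (\<Sum>j\<in>{1..d}. Xv j * toS (g j)) (Poly_Mapping.single j0 1)
      = (\<Sum>j\<in>{1..d}. if j = j0 then g j else 0)"
    unfolding lookup_sum xs by (intro sum.cong refl) (simp add: lookup_single when_def single_one_inj single_Suc0_inj)
  also have "\<dots> = g j0" using j0 by simp
  finally show ?thesis using S by (simp add: g_def)
qed

lemma ker_AA:
  fixes phi :: "nat \<Rightarrow> nat \<Rightarrow> 'k::comm_ring_1 spoly"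
  assumes pskew: "\<And>a b. a \<in> {1..n} \<Longrightarrow> b \<in> {1..n} \<Longrightarrow> phi a b = - phi b a"
    and pdiag: "\<And>a. a \<in> {1..n} \<Longrightarrow> phi a a = 0"
    and rel: "\<And>a. a \<in> {1..n} \<Longrightarrow> (\<Sum>i\<in>{1..n}. toS (Tv i) * phi i a) = (\<Sum>j\<in>{1..d}. Xv j * toS (B j a))"
    and b: "b \<in> {1..n+d}"
  shows "(\<Sum>u\<in>{1..n+d}. vv n u * AA n d phi B u b) = 0"
proof -
  have "(\<Sum>u\<in>{1..n+d}. vv n u * AA n d phi B u b) =
     (\<Sum>u\<in>{1..n}. vv n u * AA n d phi B u b) + (\<Sum>j\<in>{1..d}. vv n (n+j) * AA n d phi B (n+j) b)"
    by (rule split_sum)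
  also have "\<dots> = 0"
  proof (cases "b \<le> n")
    case True
    have 1: "(\<Sum>u\<in>{1..n}. vv n u * AA n d phi B u b) = (\<Sum>i\<in>{1..n}. toS (Tv i) * phi i b)"
      using True b by (intro sum.cong refl) (auto simp: vv_def AA_def Bfrak_def)
    have 2: "(\<Sum>j\<in>{1..d}. vv n (n+j) * AA n d phi B (n+j) b) = - (\<Sum>j\<in>{1..d}. Xv j * toS (B j b))"
      unfolding sum_negf[symmetric] using True b by (intro sum.cong refl) (auto simp: vv_def AA_def Bfrak_def)
    have "b \<in> {1..n}" using True b by simp
    then show ?thesis unfolding 1 2 rel[OF \<open>b \<in> {1..n}\<close>] by simp
  next
    case False
    define j0 where "j0 = b - n"
    have j0: "j0 \<in> {1..d}" and bj: "b = n + j0" using False b by (auto simp: j0_def)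
    have 1: "(\<Sum>u\<in>{1..n}. vv n u * AA n d phi B u b) = - toS (\<Sum>u\<in>{1..n}. Tv u * B j0 u)"
      unfolding toS_hom.hom_sum sum_negf[symmetric] using False b bj
      by (intro sum.cong refl) (auto simp: vv_def AA_def Bfrak_def toS_mult)
    have 2: "(\<Sum>j\<in>{1..d}. vv n (n+j) * AA n d phi B (n+j) b) = 0"
      using False by (intro sum.neutral) (auto simp: AA_def Bfrak_def)
    have g0: "(\<Sum>u\<in>{1..n}. Tv u * B j0 u) = 0" by (rule g_zero[OF pskew pdiag rel j0])
    show ?thesis unfolding 1 2 g0 by (simp add: toS_zero)
  qed
  finally show ?thesis .
qed

lemma prop_AA:
  fixes phi :: "nat \<Rightarrow> nat \<Rightarrow> 'k::comm_ring_1 spoly"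
  assumes pskew: "\<And>a b. a \<in> {1..n} \<Longrightarrow> b \<in> {1..n} \<Longrightarrow> phi a b = - phi b a"
    and pdiag: "\<And>a. a \<in> {1..n} \<Longrightarrow> phi a a = 0"
    and rel: "\<And>a. a \<in> {1..n} \<Longrightarrow> (\<Sum>i\<in>{1..n}. toS (Tv i) * phi i a) = (\<Sum>j\<in>{1..d}. Xv j * toS (B j a))"
    and ac: "1 \<le> a" "a < c" "c \<le> n + d"
  shows "vv n a * Fpf n d phi B c = vv n c * Fpf n d phi B a"
proof -
  have "vv n a * ((-1)^(n + d - c) * pfaff (AA n d phi B) (removeAll c [1..<n+d+1])) =
        vv n c * ((-1)^(n + d - a) * pfaff (AA n d phi B) (removeAll a [1..<n+d+1]))"
    by (rule prop_upt[OF AA_alt[OF pskew pdiag] ker_AA[OF pskew pdiag rel] ac])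
  then show ?thesis using ac by (simp add: Fpf_AA)
qed

lemma minor_AA:
  fixes phi :: "nat \<Rightarrow> nat \<Rightarrow> 'k::comm_ring_1 spoly"
  assumes pskew: "\<And>a b. a \<in> {1..n} \<Longrightarrow> b \<in> {1..n} \<Longrightarrow> phi a b = - phi b a"
    and pdiag: "\<And>a. a \<in> {1..n} \<Longrightarrow> phi a a = 0"
    and i: "i \<in> {1..n}"
  shows "cT (Fpf n d phi B i) \<subseteq> minors_ideal d n B"
proof -
  let ?A = "AA n d phi B"
  let ?sl = "sorted_list_of_set"
  let ?M = "{detm d (\<lambda>i j. B i (cols j)) | cols. strict_mono_on {1..d} cols \<and> cols ` {1..d} \<subseteq> {1..n}}"
  have alt: "alt ?A" by (rule AA_alt[OF pskew pdiag])
  define X where "X = {1..n} - {i}"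
  define ys where "ys = [n+1..<n+d+1]"
  have fX: "finite X" by (simp add: X_def)
  have lys: "length ys = d" by (simp add: ys_def)
  have rem: "removeAll i [1..<n+d+1] = ?sl X @ ys"
  proof -
    have "[1..<n+d+1] = [1..<n+1] @ [n+1..<n+d+1]" by (rule upt_split3) auto
    moreover have "removeAll i [n+1..<n+d+1] = [n+1..<n+d+1]" using i by (intro removeAll_id) auto
    moreover have "removeAll i [1..<n+1] = ?sl X"
    proof -
      have "?sl {1..n} = [1..<n+1]"
        using sorted_list_of_set_range[of 1 "n+1"] by (simp add: atLeastLessThanSuc_atLeastAtMost)
      then have "?sl X = remove1 i [1..<n+1]" unfolding X_def by (simp add: sorted_list_of_set_remove)
      also have "\<dots> = removeAll i [1..<n+1]" by (simp add: distinct_remove1_removeAll)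
      finally show ?thesis by simp
    qed
    ultimately show ?thesis by (simp add: ys_def)
  qed
  have zero: "\<forall>y\<in>set ys. \<forall>y'\<in>set ys. ?A y y' = 0" by (auto simp: ys_def AA_def Bfrak_def)
  have DAin: "DA ?A ys Z \<in> toS ` ?M" if Z: "Z \<in> Subs X d" for Z
  proof -
    have ZX: "Z \<subseteq> X" and cZ: "card Z = d" using Z by (auto simp: Subs_def)
    have fZ: "finite Z" using ZX fX finite_subset by blast
    have lZ: "length (?sl Z) = d" using cZ by simp
    have sZ: "set (?sl Z) = Z" using fZ by simp
    define cols where "cols j = ?sl Z ! (j - 1)" for j
    have inZ: "?sl Z ! u \<in> {1..n}" if "u < d" for u
      using nth_mem[of u "?sl Z"] that lZ sZ ZX by (auto simp: X_def)
    have m1: "mat d d (\<lambda>(t,u). ?A (ys!t) (?sl Z ! u)) = map_mat toS (mat d d (\<lambda>(t,u). B (Suc t) (?sl Z ! u)))"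
    proof (rule eq_matI)
      fix t u assume t: "t < dim_row (map_mat toS (mat d d (\<lambda>(t,u). B (Suc t) (?sl Z ! u))))"
        and u: "u < dim_col (map_mat toS (mat d d (\<lambda>(t,u). B (Suc t) (?sl Z ! u))))"
      have t': "t < d" and u': "u < d" using t u by auto
      have yt: "ys ! t = n + Suc t" using t' by (simp add: ys_def nth_upt del: upt_Suc)
      show "mat d d (\<lambda>(t,u). ?A (ys!t) (?sl Z ! u)) $$ (t, u) = map_mat toS (mat d d (\<lambda>(t,u). B (Suc t) (?sl Z ! u))) $$ (t, u)"
        using t' u' inZ[OF u'] yt by (auto simp: AA_def Bfrak_def)
    qed auto
    have m2: "det (mat d d (\<lambda>(t,u). B (Suc t) (?sl Z ! u))) = detm d (\<lambda>i j. B i (cols j))"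
    proof -
      have "detm d (\<lambda>i j. B i (cols j)) = det (mat d d (\<lambda>(i,j). B (Suc i) (cols (Suc j))))"
        by (rule detm_det)
      also have "(\<lambda>(i,j). B (Suc i) (cols (Suc j))) = (\<lambda>(t,u). B (Suc t) (?sl Z ! u))"
        by (auto simp: cols_def)
      finally show ?thesis by simp
    qed
    have sm: "strict_mono_on {1..d} cols"
    proof (rule strict_mono_onI)
      fix r s assume rs: "r \<in> {1..d}" "s \<in> {1..d}" "r < s"
      show "cols r < cols s" unfolding cols_def
        using sorted_wrt_nth_less[OF strict_sorted_list_of_set, of "r - 1" "s - 1" Z] rs lZ by auto
    qed
    have im: "cols ` {1..d} \<subseteq> {1..n}" using inZ by (auto simp: cols_def)
    have "DA ?A ys Z = toS (detm d (\<lambda>i j. B i (cols j)))"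
      unfolding DA_def lys m1 toS_hom.hom_det m2 ..
    then show ?thesis using sm im by blast
  qed
  have "pfaff ?A (ys @ ?sl X) \<in> ideal_gen (toS ` ?M)"
  proof -
    have "pfaff ?A (ys @ ?sl X) = (\<Sum>Z\<in>Subs X (length ys). (-1)^(\<Sum>z\<in>Z. pos z X) * DA ?A ys Z * pfaff ?A (?sl (X - Z)))"
      by (rule pfaff_laplace[OF fX zero])
    also have "\<dots> \<in> ideal_gen (toS ` ?M)"
    proof (rule ig_sum)
      show "finite (Subs X (length ys))" by (rule finite_Subs[OF fX])
    next
      fix Z assume Z: "Z \<in> Subs X (length ys)"
      have "DA ?A ys Z \<in> ideal_gen (toS ` ?M)" using DAin[of Z] Z lys by (auto intro: ig_base)
      then have "((-1)^(\<Sum>z\<in>Z. pos z X) * pfaff ?A (?sl (X - Z))) * DA ?A ys Z \<in> ideal_gen (toS ` ?M)"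
        by (rule ig_mult)
      then show "(-1)^(\<Sum>z\<in>Z. pos z X) * DA ?A ys Z * pfaff ?A (?sl (X - Z)) \<in> ideal_gen (toS ` ?M)"
        by (simp add: mult_ac)
    qed
    finally show ?thesis .
  qed
  moreover have "pfaff ?A (?sl X @ ys) = (-1)^(length (?sl X) * length ys) * pfaff ?A (ys @ ?sl X)"
    using pfaff_block[OF alt, of "[]" "?sl X" ys] by simp
  ultimately have "pfaff ?A (removeAll i [1..<n+d+1]) \<in> ideal_gen (toS ` ?M)"
    unfolding rem by (simp add: ig_mult)
  then have "Fpf n d phi B i \<in> ideal_gen (toS ` ?M)"
    using i by (simp add: Fpf_AA ig_mult)
  then have "cT (Fpf n d phi B i) \<subseteq> ideal_gen ?M" by (rule cT_sub)
  then show ?thesis by (simp add: minors_ideal_def)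
qed


lemma detm_zero: "detm 0 M = 1"
  by (simp add: detm_def perm_empty_set)

lemma one_in_minors0: "1 \<in> minors_ideal 0 n B"
proof -
  have "detm 0 (\<lambda>i j. B i (id j)) \<in> {detm 0 (\<lambda>i j. B i (cols j)) | cols. strict_mono_on {1..0} cols \<and> cols ` {1..0} \<subseteq> {1..n}}"
    by (auto intro!: exI[of _ id] simp: strict_mono_on_def)
  then show ?thesis unfolding minors_ideal_def detm_zero by (rule ig_base)
qed

theorem proposition8p4:
  fixes n d :: nat
    and c :: "nat \<Rightarrow> nat \<Rightarrow> nat \<Rightarrow> 'k::field"
    and bc :: "nat \<Rightarrow> nat \<Rightarrow> nat \<Rightarrow> 'k"
    and phi :: "nat \<Rightarrow> nat \<Rightarrow> 'k spoly"
    and B :: "nat \<Rightarrow> nat \<Rightarrow> 'k tpoly"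
    and F :: "nat \<Rightarrow> 'k spoly"
    and C :: "'k tpoly set"
  defines "phi \<equiv> (\<lambda>a b. linR d (c a b))"
    and "B \<equiv> (\<lambda>j a. linT n (bc j a))"
    and "F \<equiv> Fpf n d phi B"
    and "C \<equiv> cT (F (n + d))"
  assumes alt_diag: "\<And>a j. a \<in> {1..n} \<Longrightarrow> c a a j = 0"
    and alt_skew: "\<And>a b j. a \<in> {1..n} \<Longrightarrow> b \<in> {1..n} \<Longrightarrow> c a b j = - c b a j"
    and rel: "\<And>a. a \<in> {1..n} \<Longrightarrow>
              (\<Sum>i\<in>{1..n}. toS (Tv i) * phi i a) = (\<Sum>j\<in>{1..d}. Xv j * toS (B j a))"
  shows "(\<forall>i\<in>{1..n}. \<forall>j\<in>{1..d}.
            cT (F i) = (\<lambda>u. Tv i * u) ` cT (F (n + j)) \<and> cT (F i) = (\<lambda>u. Tv i * u) ` C)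
       \<and> (\<forall>j\<in>{1..d}. cT (F (n + j)) = C)
       \<and> C \<subseteq> colonT (minors_ideal d n B) n"
  proof -
  note defs = assms(1-4)
  have pskew: "phi a b = - phi b a" if a: "a \<in> {1..n}" and b: "b \<in> {1..n}" for a b
  proof -
    have e: "c a b = (\<lambda>j. - c b a j)" using alt_skew[OF a b] by auto
    show ?thesis unfolding defs(1) e by (simp add: linR_def constT_uminus toS_uminus sum_negf)
  qed
  have pdiag: "phi a a = 0" if a: "a \<in> {1..n}" for a
  proof -
    have e: "c a a = (\<lambda>j. 0)" using alt_diag[OF a] by auto
    show ?thesis unfolding defs(1) e by (simp add: linR_def constT_zero toS_zero)
  qed
  have F: "F = Fpf n d phi B" by (simp add: defs(3))
  have prp: "vv n a * F cc = vv n cc * F a" if "1 \<le> a" "a < cc" "cc \<le> n + d" for a cc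
    unfolding F by (rule prop_AA[OF pskew pdiag rel that])
  have partb: "cT (F (n + j)) = C" if j: "j \<in> {1..d}" for j
  proof (cases "j = d")
    case True
    then show ?thesis by (simp add: defs(4))
  next
    case False
    then have "1 \<le> n + j" "n + j < n + d" "n + d \<le> n + d" using j by auto
    from prp[OF this] have "- Xv j * F (n + d) = - Xv d * F (n + j)"
      using j by (simp add: vv_def)
    then have e: "Xv j * F (n + d) = Xv d * F (n + j)" by simp
    have "cT (F (n + j)) = cT (Xv d * F (n + j))" by (simp add: cT_Xv)
    also have "\<dots> = cT (Xv j * F (n + d))" by (simp only: e)
    also have "\<dots> = C" by (simp add: cT_Xv defs(4))
    finally show ?thesis .
  qed
  have parta: "cT (F i) = (\<lambda>u. Tv i * u) ` cT (F (n + j))" if i: "i \<in> {1..n}" and j: "j \<in> {1..d}" for i j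
  proof -
    have "1 \<le> i" "i < n + j" "n + j \<le> n + d" using i j by auto
    from prp[OF this] have e0: "toS (Tv i) * F (n + j) = - Xv j * F i"
      using i j by (simp add: vv_def)
    have e: "Xv j * F i = - (toS (Tv i) * F (n + j))" unfolding e0 by simp
    have "cT (F i) = cT (Xv j * F i)" by (simp add: cT_Xv)
    also have "\<dots> = cT (toS (Tv i) * F (n + j))" unfolding e by (rule cT_uminus)
    also have "\<dots> = (\<lambda>u. Tv i * u) ` cT (F (n + j))" by (rule cT_toS)
    finally show ?thesis .
  qed
  have partc: "C \<subseteq> colonT (minors_ideal d n B) n"
  proof
    fix u assume u: "u \<in> C"
    show "u \<in> colonT (minors_ideal d n B) n"
      unfolding colonT_def
    proof (intro CollectI ballI)
      fix i assume i: "i \<in> {1..n}"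
      show "u * Tv i \<in> minors_ideal d n B"
      proof (cases "d = 0")
        case True
        have h1: "1 \<in> minors_ideal d n B" using one_in_minors0[of n B] True by simp
        have "(u * Tv i) * 1 \<in> minors_ideal d n B"
          using h1 unfolding minors_ideal_def by (rule ig_mult)
        then show ?thesis by simp
      next
        case False
        then have j1: "1 \<in> {1..d}" by simp
        have im: "Tv i * u \<in> (\<lambda>u. Tv i * u) ` C" using u by (rule imageI)
        have "cT (F i) = (\<lambda>u. Tv i * u) ` C" using parta[OF i j1] partb[OF j1] by simp
        then have "Tv i * u \<in> cT (F i)" using im by simp
        also have "cT (F i) \<subseteq> minors_ideal d n B" unfolding F by (rule minor_AA[OF pskew pdiag i])
        finally show ?thesis by (simp add: mult.commute)
      qed
    qed
  qed
  show ?thesis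
  proof (intro conjI ballI)
    fix i j assume i: "i \<in> {1..n}" and j: "j \<in> {1..d}"
    show "cT (F i) = (\<lambda>u. Tv i * u) ` cT (F (n + j))" by (rule parta[OF i j])
    show "cT (F i) = (\<lambda>u. Tv i * u) ` C" using parta[OF i j] partb[OF j] by simp
  next
    fix j assume j: "j \<in> {1..d}"
    show "cT (F (n + j)) = C" by (rule partb[OF j])
  next
    show "C \<subseteq> colonT (minors_ideal d n B) n" by (rule partc)
  qed
qed

end
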